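(* Let $\mathcal M$ be a unichain, indexable MDP whose Whittle indices $(\lambda_s)_{s\in\mathcal S}$ are pairwise distinct. Then there exists $\delta>0$ such that every MDP $\widehat{\mathcal M}=(\mathcal S,\{0,1\},(\hat P^a)_a,(r^a)_a)$ which has the same rewards as $\mathcal M$, has the same support as $\mathcal M$, and satisfies $\|\mathcal M-\widehat{\mathcal M}\|_\infty\le\delta$, is indexable. In other words, $\mathcal M$ is an interior point (within MDPs with the same support and rewards) of the set of indexable MDPs.
   Context: Setting. An MDP is $\mathcal M=(\mathcal S,\{0,1\},(P^a)_{a\in\{0,1\}},(r^a)_{a\in\{0,1\}})$, with finite state space $\mathcal S$, row-stochastic matrices $P^0,P^1\in\mathbb R^{\mathcal S\times\mathcal S}$, and reward vectors $r^0,r^1\in\mathbb R^{\mathcal S}$. A policy is identified with the subset $\pi\subseteq\mathcal S$ of states where action $1$ is played; it induces $P^\pi$ (row $s$ equal to $P^1_{s,\cdot}$ if $s\in\pi$ and $P^0_{s,\cdot}$ otherwise) and $r^\pi$ similarly. $\mathcal M$ is unichain if $P^\pi$ has a single recurrent class for every policy $\pi$. For $\lambda\in\mathbb R$, the penalized MDP $\mathcal M(\lambda)$ has the same transitions and rewards $r^1-\lambda\mathbf 1$ (action 1) and $r^0$ (action 0). For a unichain policy $\pi$ in $\mathcal M(\lambda)$, the gain $g^\pi(\lambda)\in\mathbb R$ and bias $b^\pi(\lambda)\in\mathbb R^{\mathcal S}$ (defined up to an additive constant) solve $g^\pi\mathbf 1+b^\pi=r^\pi+P^\pi b^\pi$.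 The activation advantage of $s$ under $\pi$ is $\alpha^\pi_s(\lambda)=r^1_s-\lambda-r^0_s+(P^1_{s,\cdot}-P^0_{s,\cdot})\cdot b^\pi(\lambda)$. A policy is BO (bias optimal) in $\mathcal M(\lambda)$ if it is gain optimal and has maximal bias among gain-optimal policies; for unichain MDPs, $\pi$ is BO in $\mathcal M(\lambda)$ iff $\alpha^\pi_s(\lambda)\ge 0$ for all $s\in\pi$ and $\alpha^\pi_s(\lambda)\le0$ for all $s\notin\pi$. The optimal activation advantage is $\alpha^*_s(\lambda):=\alpha^\pi_s(\lambda)$ for any BO policy $\pi$ of $\mathcal M(\lambda)$ (this does not depend on the choice). $\mathcal M$ is indexable if for every $s\in\mathcal S$ there is $\lambda_s\in\mathbb R$ (the Whittle index of $s$) with $\alpha^*_s(\lambda)>0$ for $\lambda<\lambda_s$ and $\alpha^*_s(\lambda)<0$ for $\lambda>\lambda_s$. Hats denote the same objects computed in $\widehat{\mathcal M}$. For matrices, $\|A\|_\infty=\max_s\sum_{s'}|A_{s,s'}|$; for two MDPs with the same rewards, $\|\mathcal M-\widehat{\mathcal M}\|_\infty:=\max_{a\in\{0,1\}}\|P^a-\hat P^a\|_\infty$. $\mathcal M$ and $\widehat{\mathcal M}$ have the same support if for all $a,s,s'$: $P^a_{s,s'}>0\iff\hat P^a_{s,s'}>0$. *)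

theory Defs
  imports Complex_Main
begin

text \<open>Actions are encoded as booleans: True = action 1 (activate), False = action 0.
  A (two-action) MDP on the finite state type 's is given by transition kernels
  P :: bool => 's => 's => real and rewards r :: bool => 's => real.
  A policy is the set of states where action 1 is played.\<close>

definition is_mdp :: "(bool \<Rightarrow> 's::finite \<Rightarrow> 's \<Rightarrow> real) \<Rightarrow> bool" where
  "is_mdp P \<longleftrightarrow> (\<forall>a s. (\<forall>s'. 0 \<le> P a s s') \<and> (\<Sum>s'\<in>UNIV. P a s s') = 1)"

definition pol_trans :: "(bool \<Rightarrow> 's \<Rightarrow> 's \<Rightarrow> real) \<Rightarrow> 's set \<Rightarrow> 's \<Rightarrow> 's \<Rightarrow> real" where
  "pol_trans P \<pi> s = P (s \<in> \<pi>) s"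

definition pol_rew :: "(bool \<Rightarrow> 's \<Rightarrow> real) \<Rightarrow> real \<Rightarrow> 's set \<Rightarrow> 's \<Rightarrow> real" where
  "pol_rew r l \<pi> s = (if s \<in> \<pi> then r True s - l else r False s)"

definition reach :: "('s \<Rightarrow> 's \<Rightarrow> real) \<Rightarrow> ('s \<times> 's) set" where
  "reach Q = {(s, t). 0 < Q s t}\<^sup>*"

definition recurrent :: "('s \<Rightarrow> 's \<Rightarrow> real) \<Rightarrow> 's \<Rightarrow> bool" where
  "recurrent Q s \<longleftrightarrow> (\<forall>t. (s, t) \<in> reach Q \<longrightarrow> (t, s) \<in> reach Q)"

definition single_recurrent_class :: "('s \<Rightarrow> 's \<Rightarrow> real) \<Rightarrow> bool" where
  "single_recurrent_class Q \<longleftrightarrow>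
     (\<exists>s. recurrent Q s) \<and> (\<forall>s t. recurrent Q s \<and> recurrent Q t \<longrightarrow> (s, t) \<in> reach Q)"

definition unichain :: "(bool \<Rightarrow> 's \<Rightarrow> 's \<Rightarrow> real) \<Rightarrow> bool" where
  "unichain P \<longleftrightarrow> (\<forall>\<pi>. single_recurrent_class (pol_trans P \<pi>))"

definition poisson :: "('s::finite \<Rightarrow> 's \<Rightarrow> real) \<Rightarrow> ('s \<Rightarrow> real) \<Rightarrow> real \<Rightarrow> ('s \<Rightarrow> real) \<Rightarrow> bool" where
  "poisson Q rr g b \<longleftrightarrow> (\<forall>s. g + b s = rr s + (\<Sum>s'\<in>UNIV. Q s s' * b s'))"

definition stationary :: "('s::finite \<Rightarrow> 's \<Rightarrow> real) \<Rightarrow> ('s \<Rightarrow> real) \<Rightarrow> bool" where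
  "stationary Q \<mu> \<longleftrightarrow> (\<forall>s. 0 \<le> \<mu> s) \<and> (\<Sum>s\<in>UNIV. \<mu> s) = 1 \<and>
     (\<forall>s'. (\<Sum>s\<in>UNIV. \<mu> s * Q s s') = \<mu> s')"

text \<open>Gain of policy pi in M(lambda) (unique for unichain policies).\<close>
definition gain :: "(bool \<Rightarrow> 's::finite \<Rightarrow> 's \<Rightarrow> real) \<Rightarrow> (bool \<Rightarrow> 's \<Rightarrow> real) \<Rightarrow> real \<Rightarrow> 's set \<Rightarrow> real" where
  "gain P r l \<pi> = (THE g. \<exists>b. poisson (pol_trans P \<pi>) (pol_rew r l \<pi>) g b)"

text \<open>Bias of policy pi in M(lambda), normalized as the standard (Cesaro) bias:
  it solves the Poisson equation and has zero mean under the stationary distribution.\<close>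
definition bias :: "(bool \<Rightarrow> 's::finite \<Rightarrow> 's \<Rightarrow> real) \<Rightarrow> (bool \<Rightarrow> 's \<Rightarrow> real) \<Rightarrow> real \<Rightarrow> 's set \<Rightarrow> 's \<Rightarrow> real" where
  "bias P r l \<pi> = (THE b. poisson (pol_trans P \<pi>) (pol_rew r l \<pi>) (gain P r l \<pi>) b \<and>
      (\<forall>\<mu>. stationary (pol_trans P \<pi>) \<mu> \<longrightarrow> (\<Sum>s\<in>UNIV. \<mu> s * b s) = 0))"

definition adv :: "(bool \<Rightarrow> 's::finite \<Rightarrow> 's \<Rightarrow> real) \<Rightarrow> (bool \<Rightarrow> 's \<Rightarrow> real) \<Rightarrow> real \<Rightarrow> 's set \<Rightarrow> 's \<Rightarrow> real" where
  "adv P r l \<pi> s = r True s - l - r False s +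
      (\<Sum>s'\<in>UNIV. (P True s s' - P False s s') * bias P r l \<pi> s')"

definition gain_optimal :: "(bool \<Rightarrow> 's::finite \<Rightarrow> 's \<Rightarrow> real) \<Rightarrow> (bool \<Rightarrow> 's \<Rightarrow> real) \<Rightarrow> real \<Rightarrow> 's set \<Rightarrow> bool" where
  "gain_optimal P r l \<pi> \<longleftrightarrow> (\<forall>\<pi>'. gain P r l \<pi>' \<le> gain P r l \<pi>)"

definition bias_optimal :: "(bool \<Rightarrow> 's::finite \<Rightarrow> 's \<Rightarrow> real) \<Rightarrow> (bool \<Rightarrow> 's \<Rightarrow> real) \<Rightarrow> real \<Rightarrow> 's set \<Rightarrow> bool" where
  "bias_optimal P r l \<pi> \<longleftrightarrow> gain_optimal P r l \<pi> \<and>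
     (\<forall>\<pi>'. gain_optimal P r l \<pi>' \<longrightarrow> (\<forall>s. bias P r l \<pi>' s \<le> bias P r l \<pi> s))"

definition opt_adv :: "(bool \<Rightarrow> 's::finite \<Rightarrow> 's \<Rightarrow> real) \<Rightarrow> (bool \<Rightarrow> 's \<Rightarrow> real) \<Rightarrow> real \<Rightarrow> 's \<Rightarrow> real" where
  "opt_adv P r l s = adv P r l (SOME \<pi>. bias_optimal P r l \<pi>) s"

definition is_whittle_index :: "(bool \<Rightarrow> 's::finite \<Rightarrow> 's \<Rightarrow> real) \<Rightarrow> (bool \<Rightarrow> 's \<Rightarrow> real) \<Rightarrow> 's \<Rightarrow> real \<Rightarrow> bool" where
  "is_whittle_index P r s ls \<longleftrightarrow>
     (\<forall>l. l < ls \<longrightarrow> 0 < opt_adv P r l s) \<and> (\<forall>l. ls < l \<longrightarrow> opt_adv P r l s < 0)"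

definition indexable :: "(bool \<Rightarrow> 's::finite \<Rightarrow> 's \<Rightarrow> real) \<Rightarrow> (bool \<Rightarrow> 's \<Rightarrow> real) \<Rightarrow> bool" where
  "indexable P r \<longleftrightarrow> (\<forall>s. \<exists>ls. is_whittle_index P r s ls)"

definition whittle :: "(bool \<Rightarrow> 's::finite \<Rightarrow> 's \<Rightarrow> real) \<Rightarrow> (bool \<Rightarrow> 's \<Rightarrow> real) \<Rightarrow> 's \<Rightarrow> real" where
  "whittle P r s = (THE ls. is_whittle_index P r s ls)"

definition same_support :: "(bool \<Rightarrow> 's \<Rightarrow> 's \<Rightarrow> real) \<Rightarrow> (bool \<Rightarrow> 's \<Rightarrow> 's \<Rightarrow> real) \<Rightarrow> bool" where
  "same_support P Q \<longleftrightarrow> (\<forall>a s s'. 0 < P a s s' \<longleftrightarrow> 0 < Q a s s')"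

definition mdp_dist :: "(bool \<Rightarrow> 's::finite \<Rightarrow> 's \<Rightarrow> real) \<Rightarrow> (bool \<Rightarrow> 's \<Rightarrow> 's \<Rightarrow> real) \<Rightarrow> real" where
  "mdp_dist P Q = Max {(\<Sum>s'\<in>UNIV. \<bar>P a s s' - Q a s s'\<bar>) | a s. True}"

end

theory Submission
  imports Defs "HOL-Analysis.Analysis"
begin


definition stoch :: "('s::finite \<Rightarrow> 's \<Rightarrow> real) \<Rightarrow> bool" where
  "stoch Q \<longleftrightarrow> (\<forall>s t. 0 \<le> Q s t) \<and> (\<forall>s. (\<Sum>t\<in>UNIV. Q s t) = 1)"

lemma stoch_pol: "is_mdp P \<Longrightarrow> stoch (pol_trans P \<pi>)"
  unfolding is_mdp_def stoch_def pol_trans_def by auto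

lemma reach_closed:
  assumes cl: "\<forall>s t. s \<in> M \<longrightarrow> 0 < Q s t \<longrightarrow> t \<in> M"
    and st: "(s,t) \<in> reach Q" and s: "s \<in> M"
  shows "t \<in> M"
  using st s unfolding reach_def
  by (induction rule: rtrancl_induct) (use cl in auto)

lemma reach_refl: "(s,s) \<in> reach Q" unfolding reach_def by auto

lemma reach_trans: "(s,t) \<in> reach Q \<Longrightarrow> (t,u) \<in> reach Q \<Longrightarrow> (s,u) \<in> reach Q"
  unfolding reach_def by auto

lemma reach_step: "0 < Q s t \<Longrightarrow> (s,t) \<in> reach Q"
  unfolding reach_def by auto

lemma recurrent_reach: "recurrent Q s \<Longrightarrow> (s,t) \<in> reach Q \<Longrightarrow> recurrent Q t"
  unfolding recurrent_def by (meson reach_trans)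

lemma exists_recurrent:
  fixes Q :: "'s::finite \<Rightarrow> 's \<Rightarrow> real"
  shows "\<exists>u. (s,u) \<in> reach Q \<and> recurrent Q u"
proof -
  define RS where "RS x = {v. (x,v) \<in> reach Q}" for x
  have "\<exists>x. (s,x) \<in> reach Q \<and> (\<forall>y. (s,y) \<in> reach Q \<longrightarrow> card (RS x) \<le> card (RS y))"
    by (rule ex_has_least_nat) (rule reach_refl)
  then obtain u where u: "(s,u) \<in> reach Q"
    and umin: "\<And>y. (s,y) \<in> reach Q \<Longrightarrow> card (RS u) \<le> card (RS y)" by blast
  have "recurrent Q u"
    unfolding recurrent_def
  proof (intro allI impI)
    fix t assume ut: "(u,t) \<in> reach Q"
    have sub: "RS t \<subseteq> RS u" unfolding RS_def using reach_trans[OF ut] by auto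
    have st: "(s,t) \<in> reach Q" by (rule reach_trans[OF u ut])
    have "card (RS u) \<le> card (RS t)" by (rule umin[OF st])
    then have "card (RS t) = card (RS u)" using card_mono[OF _ sub] by simp
    then have "RS t = RS u" by (rule card_subset_eq[OF _ sub, rotated]) simp
    moreover have "u \<in> RS u" unfolding RS_def by (simp add: reach_refl)
    ultimately show "(t,u) \<in> reach Q" unfolding RS_def by blast
  qed
  with u show ?thesis by blast
qed

lemma stoch_sum_const: "stoch Q \<Longrightarrow> (\<Sum>t\<in>UNIV. Q s t * c) = c"
  unfolding stoch_def by (simp add: sum_distrib_right[symmetric])

lemma superharm_min:
  fixes Q :: "'s::finite \<Rightarrow> 's \<Rightarrow> real"
  assumes st: "stoch Q" and src: "single_recurrent_class Q"
    and sh: "\<And>s. (\<Sum>t\<in>UNIV. Q s t * h t) \<le> h s"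
  shows "\<exists>c. (\<forall>u. recurrent Q u \<longrightarrow> h u = c) \<and> (\<forall>s. c \<le> h s)"
proof -
  define m where "m = Min (range h)"
  have mle: "m \<le> h s" for s unfolding m_def by simp
  have "m \<in> range h" unfolding m_def by (rule Min_in) auto
  then obtain s0 where s0: "h s0 = m" by auto
  define M where "M = {s. h s = m}"
  have cl: "t \<in> M" if "s \<in> M" "0 < Q s t" for s t
  proof -
    have "(\<Sum>t\<in>UNIV. Q s t * (h t - m)) = (\<Sum>t\<in>UNIV. Q s t * h t) - m"
      using stoch_sum_const[OF st, of s m] by (simp add: algebra_simps sum_subtractf)
    also have "\<dots> \<le> 0" using sh[of s] that(1) unfolding M_def by simp
    finally have le0: "(\<Sum>t\<in>UNIV. Q s t * (h t - m)) \<le> 0" .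
    have nn: "\<forall>t\<in>UNIV. 0 \<le> Q s t * (h t - m)" using st mle unfolding stoch_def by simp
    have "(\<Sum>t\<in>UNIV. Q s t * (h t - m)) = 0" using le0 nn by (simp add: sum_nonneg order_antisym)
    then have "Q s t * (h t - m) = 0" using sum_nonneg_eq_0_iff[of UNIV "\<lambda>t. Q s t * (h t - m)"] nn by simp
    with that(2) show ?thesis unfolding M_def by simp
  qed
  have cl': "\<forall>s t. s \<in> M \<longrightarrow> 0 < Q s t \<longrightarrow> t \<in> M" using cl by blast
  obtain u0 where u0: "(s0,u0) \<in> reach Q" "recurrent Q u0" using exists_recurrent by blast
  have u0M: "u0 \<in> M" using reach_closed[OF cl' u0(1)] s0 unfolding M_def by auto
  have "h u = m" if "recurrent Q u" for u
  proof -
    have "(u0,u) \<in> reach Q" using src u0(2) that unfolding single_recurrent_class_def by blast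
    then show ?thesis using reach_closed[OF cl' _ u0M] unfolding M_def by blast
  qed
  then show ?thesis using mle by blast
qed

lemma harmonic_const:
  fixes Q :: "'s::finite \<Rightarrow> 's \<Rightarrow> real"
  assumes st: "stoch Q" and src: "single_recurrent_class Q"
    and hh: "\<And>s. (\<Sum>t\<in>UNIV. Q s t * h t) = h s"
  shows "h s = h t"
proof -
  obtain c1 where c1: "\<forall>u. recurrent Q u \<longrightarrow> h u = c1" "\<forall>s. c1 \<le> h s"
    using superharm_min[OF st src, of h] hh by force
  have "\<And>s. (\<Sum>t\<in>UNIV. Q s t * (- h t)) \<le> - h s" using hh by (simp add: sum_negf)
  then obtain c2 where c2: "\<forall>u. recurrent Q u \<longrightarrow> - h u = c2" "\<forall>s. c2 \<le> - h s"
    using superharm_min[OF st src, of "\<lambda>x. - h x"] by blast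
  obtain u where "recurrent Q u" using src unfolding single_recurrent_class_def by blast
  then have "c1 = - c2" using c1 c2 by force
  then have "h x = c1" for x using c1(2)[rule_format, of x] c2(2)[rule_format, of x] by linarith
  then show ?thesis by simp
qed


lemma poisson_gain_nonneg:
  fixes Q :: "'s::finite \<Rightarrow> 's \<Rightarrow> real"
  assumes st: "stoch Q" and p: "poisson Q rr g b" and nn: "\<And>s. 0 \<le> rr s"
  shows "0 \<le> g"
proof -
  define m where "m = Min (range b)"
  have "m \<in> range b" unfolding m_def by (rule Min_in) auto
  then obtain s where s: "b s = m" by auto
  have "b s \<le> b t" for t unfolding s m_def by simp
  then have "(\<Sum>t\<in>UNIV. Q s t * b s) \<le> (\<Sum>t\<in>UNIV. Q s t * b t)"
    using st unfolding stoch_def by (intro sum_mono mult_left_mono) auto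
  then have "b s \<le> (\<Sum>t\<in>UNIV. Q s t * b t)" using stoch_sum_const[OF st] by simp
  moreover have "g + b s = rr s + (\<Sum>t\<in>UNIV. Q s t * b t)" using p unfolding poisson_def by simp
  ultimately show ?thesis using nn[of s] by linarith
qed

lemma poisson_lin:
  assumes "poisson Q r1 g1 b1" "poisson Q r2 g2 b2"
  shows "poisson Q (\<lambda>s. x * r1 s + y * r2 s) (x * g1 + y * g2) (\<lambda>s. x * b1 s + y * b2 s)"
  unfolding poisson_def
proof
  fix s
  have e1: "g1 + b1 s = r1 s + (\<Sum>t\<in>UNIV. Q s t * b1 t)" using assms(1) unfolding poisson_def by simp
  have e2: "g2 + b2 s = r2 s + (\<Sum>t\<in>UNIV. Q s t * b2 t)" using assms(2) unfolding poisson_def by simp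
  have "(\<Sum>t\<in>UNIV. Q s t * (x * b1 t + y * b2 t)) = x * (\<Sum>t\<in>UNIV. Q s t * b1 t) + y * (\<Sum>t\<in>UNIV. Q s t * b2 t)"
    by (simp add: algebra_simps sum.distrib sum_distrib_left)
  show "x * g1 + y * g2 + (x * b1 s + y * b2 s) = x * r1 s + y * r2 s + (\<Sum>t\<in>UNIV. Q s t * (x * b1 t + y * b2 t))"
  proof -
    have "x * (g1 + b1 s) + y * (g2 + b2 s) = x * (r1 s + (\<Sum>t\<in>UNIV. Q s t * b1 t)) + y * (r2 s + (\<Sum>t\<in>UNIV. Q s t * b2 t))"
      using e1 e2 by simp
    then show ?thesis using \<open>(\<Sum>t\<in>UNIV. Q s t * (x * b1 t + y * b2 t)) = _\<close> by (simp add: algebra_simps)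
  qed
qed

lemma poisson_diff:
  assumes "poisson Q r1 g1 b1" "poisson Q r2 g2 b2"
  shows "poisson Q (\<lambda>s. r1 s - r2 s) (g1 - g2) (\<lambda>s. b1 s - b2 s)"
  using poisson_lin[OF assms, of 1 "-1"] by simp

lemma poisson_sum:
  assumes "finite I" "\<And>i. i \<in> I \<Longrightarrow> poisson Q (R i) (G i) (B i)"
  shows "poisson Q (\<lambda>s. \<Sum>i\<in>I. R i s) (\<Sum>i\<in>I. G i) (\<lambda>s. \<Sum>i\<in>I. B i s)"
  using assms
proof (induction I rule: finite_induct)
  case empty
  then show ?case unfolding poisson_def by simp
next
  case (insert x F)
  have "poisson Q (\<lambda>s. 1 * R x s + 1 * (\<Sum>i\<in>F. R i s)) (1 * G x + 1 * (\<Sum>i\<in>F. G i)) (\<lambda>s. 1 * B x s + 1 * (\<Sum>i\<in>F. B i s))"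
    by (rule poisson_lin) (use insert in auto)
  then show ?case using insert by simp
qed

lemma poisson_shift:
  assumes st: "stoch Q" and p: "poisson Q rr g b"
  shows "poisson Q rr g (\<lambda>s. b s + c)"
  unfolding poisson_def
proof
  fix s
  have "(\<Sum>t\<in>UNIV. Q s t * (b t + c)) = (\<Sum>t\<in>UNIV. Q s t * b t) + c"
    using stoch_sum_const[OF st, of s c] by (simp add: algebra_simps sum.distrib)
  then show "g + (b s + c) = rr s + (\<Sum>t\<in>UNIV. Q s t * (b t + c))"
    using p unfolding poisson_def by simp
qed

lemma poisson_unique:
  fixes Q :: "'s::finite \<Rightarrow> 's \<Rightarrow> real"
  assumes st: "stoch Q" and src: "single_recurrent_class Q"
    and p1: "poisson Q rr g1 b1" and p2: "poisson Q rr g2 b2"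
  shows "g1 = g2 \<and> (\<forall>s. b1 s = b2 s + (b1 s0 - b2 s0))"
proof -
  have pd: "poisson Q (\<lambda>s. 0) (g1 - g2) (\<lambda>s. b1 s - b2 s)" using poisson_diff[OF p1 p2] by simp
  have "0 \<le> g1 - g2" by (rule poisson_gain_nonneg[OF st pd]) simp
  moreover have "0 \<le> -(g1 - g2)"
  proof -
    have pn: "poisson Q (\<lambda>s. 0) (-(g1-g2)) (\<lambda>s. -(b1 s - b2 s))"
      using poisson_lin[OF pd pd, where x="-1" and y=0] by simp
    show ?thesis by (rule poisson_gain_nonneg[OF st pn]) simp
  qed
  ultimately have g: "g1 = g2" by simp
  have "(\<Sum>t\<in>UNIV. Q s t * (b1 t - b2 t)) = b1 s - b2 s" for s
  proof -
    have "g1 - g2 + (b1 s - b2 s) = 0 + (\<Sum>t\<in>UNIV. Q s t * (b1 t - b2 t))"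
      using pd unfolding poisson_def by blast
    then show ?thesis using g by simp
  qed
  then have "b1 s - b2 s = b1 s0 - b2 s0" for s by (rule harmonic_const[OF st src, where h="\<lambda>s. b1 s - b2 s"])
  with g show ?thesis by (simp add: algebra_simps)
qed


lemma poisson_exists:
  fixes Q :: "'s::finite \<Rightarrow> 's \<Rightarrow> real"
  assumes st: "stoch Q" and src: "single_recurrent_class Q"
  shows "\<exists>g b. poisson Q rr g b"
proof -
  fix s0 :: 's
  define T :: "real^'s \<Rightarrow> real^'s" where
    "T x = (\<chi> s. x$s0 + (if s = s0 then 0 else x$s)
              - (\<Sum>t\<in>UNIV-{s0}. Q s t * x$t))" for x
  have lin: "linear T"
  proof (rule linearI)
    fix x y :: "real^'s"
    show "T (x + y) = T x + T y"
      unfolding T_def by (simp add: vec_eq_iff algebra_simps sum.distrib)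
  next
    fix c :: real and x :: "real^'s"
    show "T (c *\<^sub>R x) = c *\<^sub>R T x"
      unfolding T_def by (simp add: vec_eq_iff algebra_simps sum_distrib_left)
  qed
  have ker: "z = 0" if z: "T z = 0" for z
  proof -
    define b where "b s = (if s = s0 then 0 else z$s)" for s
    have sb: "(\<Sum>t\<in>UNIV. Q s t * b t) = (\<Sum>t\<in>UNIV-{s0}. Q s t * z$t)" for s
      unfolding b_def by (simp add: sum.If_cases if_distrib[of "\<lambda>x. Q _ _ * x"] Diff_eq)
    have "z$s0 + b s - (\<Sum>t\<in>UNIV. Q s t * b t) = 0" for s
      using z unfolding T_def sb by (simp add: vec_eq_iff b_def)
    then have p: "poisson Q (\<lambda>s. 0) (z$s0) b" unfolding poisson_def by (simp add: algebra_simps)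
    have p0: "poisson Q (\<lambda>s. 0) 0 (\<lambda>s. 0)" unfolding poisson_def by simp
    from poisson_unique[OF st src p p0, of s0] have "z$s0 = 0" "\<And>s. b s = b s0" by auto
    moreover have "b s0 = 0" unfolding b_def by simp
    ultimately show ?thesis unfolding b_def by (simp add: vec_eq_iff) (metis)
  qed
  have "inj T"
  proof (rule injI)
    fix x y assume "T x = T y"
    then have "T (x - y) = 0" using linear_diff[OF lin] by simp
    then have "x - y = 0" by (rule ker)
    then show "x = y" by simp
  qed
  then have "surj T" by (rule linear_inj_imp_surj[OF lin])
  then obtain x where x: "T x = (\<chi> s. rr s)" by (metis surjD)
  define b where "b s = (if s = s0 then 0 else x$s)" for s
  have sb: "(\<Sum>t\<in>UNIV. Q s t * b t) = (\<Sum>t\<in>UNIV-{s0}. Q s t * x$t)" for s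
    unfolding b_def by (simp add: sum.If_cases if_distrib[of "\<lambda>x. Q _ _ * x"] Diff_eq)
  have "x$s0 + b s - (\<Sum>t\<in>UNIV. Q s t * b t) = rr s" for s
    using x unfolding T_def sb by (simp add: vec_eq_iff b_def)
  then have "poisson Q rr (x$s0) b" unfolding poisson_def by (simp add: algebra_simps)
  then show ?thesis by blast
qed


lemma stationary_gain:
  fixes Q :: "'s::finite \<Rightarrow> 's \<Rightarrow> real"
  assumes mu: "stationary Q \<mu>" and p: "poisson Q rr g b"
  shows "(\<Sum>s\<in>UNIV. \<mu> s * rr s) = g"
proof -
  have m1: "(\<Sum>s\<in>UNIV. \<mu> s) = 1" and ms: "\<And>t. (\<Sum>s\<in>UNIV. \<mu> s * Q s t) = \<mu> t"
    using mu unfolding stationary_def by auto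
  have "(\<Sum>s\<in>UNIV. \<mu> s * (g + b s)) = (\<Sum>s\<in>UNIV. \<mu> s * (rr s + (\<Sum>t\<in>UNIV. Q s t * b t)))"
    using p unfolding poisson_def by simp
  moreover have "(\<Sum>s\<in>UNIV. \<mu> s * (g + b s)) = g + (\<Sum>s\<in>UNIV. \<mu> s * b s)"
    using m1 by (simp add: algebra_simps sum.distrib sum_distrib_left[symmetric])
  moreover have "(\<Sum>s\<in>UNIV. \<mu> s * (\<Sum>t\<in>UNIV. Q s t * b t)) = (\<Sum>t\<in>UNIV. \<mu> t * b t)"
  proof -
    have "(\<Sum>s\<in>UNIV. \<mu> s * (\<Sum>t\<in>UNIV. Q s t * b t)) = (\<Sum>s\<in>UNIV. \<Sum>t\<in>UNIV. \<mu> s * Q s t * b t)"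
      by (simp add: sum_distrib_left mult.assoc)
    also have "\<dots> = (\<Sum>t\<in>UNIV. \<Sum>s\<in>UNIV. \<mu> s * Q s t * b t)" by (rule sum.swap)
    also have "\<dots> = (\<Sum>t\<in>UNIV. (\<Sum>s\<in>UNIV. \<mu> s * Q s t) * b t)" by (simp add: sum_distrib_right)
    also have "\<dots> = (\<Sum>t\<in>UNIV. \<mu> t * b t)" using ms by simp
    finally show ?thesis .
  qed
  moreover have "(\<Sum>s\<in>UNIV. \<mu> s * (rr s + (\<Sum>t\<in>UNIV. Q s t * b t)))
      = (\<Sum>s\<in>UNIV. \<mu> s * rr s) + (\<Sum>s\<in>UNIV. \<mu> s * (\<Sum>t\<in>UNIV. Q s t * b t))"
    by (simp add: algebra_simps sum.distrib)
  ultimately show ?thesis by linarith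
qed

lemma poisson_scale: "poisson Q r g b \<Longrightarrow> poisson Q (\<lambda>s. c * r s) (c * g) (\<lambda>s. c * b s)"
  using poisson_lin[of Q r g b r g b c 0] by simp

definition ind :: "'s \<Rightarrow> 's \<Rightarrow> real" where "ind t s = (if s = t then 1 else 0)"

lemma sum_ind: "(\<Sum>t\<in>UNIV. f t * ind t s) = (f (s::'s::finite) :: real)"
  unfolding ind_def by (simp add: if_distrib[of "\<lambda>x. _ * x"] sum.delta sum.delta' cong: if_cong)

lemma sum_ind2: "(\<Sum>t\<in>UNIV. f t * ind s t) = (f (s::'s::finite) :: real)"
  unfolding ind_def by (simp add: if_distrib[of "\<lambda>x. _ * x"] sum.delta sum.delta' cong: if_cong)

lemma poisson_basis:
  fixes Q :: "'s::finite \<Rightarrow> 's \<Rightarrow> real"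
  assumes st: "stoch Q" and src: "single_recurrent_class Q"
  obtains G B where "\<And>t. poisson Q (ind t) (G t) (B t)"
    and "\<And>rr. poisson Q rr (\<Sum>t\<in>UNIV. rr t * G t) (\<lambda>s. \<Sum>t\<in>UNIV. rr t * B t s)"
proof -
  have "\<forall>t. \<exists>gb. poisson Q (ind t) (fst gb) (snd gb)"
    using poisson_exists[OF st src] by auto
  then obtain F where F: "\<forall>t. poisson Q (ind t) (fst (F t)) (snd (F t))" by metis
  define G where "G t = fst (F t)" for t
  define B where "B t = snd (F t)" for t
  have pb: "poisson Q (ind t) (G t) (B t)" for t using F unfolding G_def B_def by auto
  have "poisson Q rr (\<Sum>t\<in>UNIV. rr t * G t) (\<lambda>s. \<Sum>t\<in>UNIV. rr t * B t s)" for rr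
  proof -
    have "poisson Q (\<lambda>s. \<Sum>t\<in>UNIV. rr t * ind t s) (\<Sum>t\<in>UNIV. rr t * G t) (\<lambda>s. \<Sum>t\<in>UNIV. rr t * B t s)"
      by (rule poisson_sum) (auto intro: poisson_scale pb)
    then show ?thesis by (simp add: sum_ind)
  qed
  with pb that show ?thesis by blast
qed

lemma stationary_exists:
  fixes Q :: "'s::finite \<Rightarrow> 's \<Rightarrow> real"
  assumes st: "stoch Q" and src: "single_recurrent_class Q"
  shows "\<exists>\<mu>. stationary Q \<mu>"
proof -
  obtain G B where pb: "\<And>t. poisson Q (ind t) (G t) (B t)"
    and rep: "\<And>rr. poisson Q rr (\<Sum>t\<in>UNIV. rr t * G t) (\<lambda>s. \<Sum>t\<in>UNIV. rr t * B t s)"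
    using poisson_basis[OF st src] by blast
  have nn: "0 \<le> G t" for t by (rule poisson_gain_nonneg[OF st pb]) (simp add: ind_def)
  have one: "poisson Q (\<lambda>s. 1) 1 (\<lambda>s. 0)" unfolding poisson_def by simp
  have "(\<Sum>t\<in>UNIV. 1 * G t) = 1"
    using poisson_unique[OF st src rep[of "\<lambda>s. 1"] one] by blast
  then have s1: "(\<Sum>t\<in>UNIV. G t) = 1" by simp
  have "(\<Sum>s\<in>UNIV. G s * Q s t) = G t" for t
  proof -
    define rr where "rr s = Q s t - ind t s" for s
    have p0: "poisson Q rr 0 (\<lambda>s. - ind t s)"
      unfolding poisson_def rr_def by (simp add: sum_negf sum_ind2)
    have "(\<Sum>s\<in>UNIV. rr s * G s) = 0"
      using poisson_unique[OF st src rep[of rr] p0] by blast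
    then have "(\<Sum>s\<in>UNIV. Q s t * G s) - (\<Sum>s\<in>UNIV. ind t s * G s) = 0"
      unfolding rr_def by (simp add: algebra_simps sum_subtractf)
    moreover have "(\<Sum>s\<in>UNIV. ind t s * G s) = G t"
      using sum_ind2[of G t] by (simp add: mult.commute)
    ultimately show ?thesis by (simp add: mult.commute)
  qed
  then have "stationary Q G" unfolding stationary_def using nn s1 by auto
  then show ?thesis by blast
qed

lemma stationary_unique:
  fixes Q :: "'s::finite \<Rightarrow> 's \<Rightarrow> real"
  assumes st: "stoch Q" and src: "single_recurrent_class Q"
    and m1: "stationary Q \<mu>1" and m2: "stationary Q \<mu>2"
  shows "\<mu>1 = \<mu>2"
proof
  fix t
  obtain g b where p: "poisson Q (ind t) g b" using poisson_exists[OF st src] by blast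
  have "\<mu>1 t = g" using stationary_gain[OF m1 p] sum_ind2[of \<mu>1 t] by (simp add: mult.commute)
  moreover have "\<mu>2 t = g" using stationary_gain[OF m2 p] sum_ind2[of \<mu>2 t] by (simp add: mult.commute)
  ultimately show "\<mu>1 t = \<mu>2 t" by simp
qed


lemma stationary_support:
  fixes Q :: "'s::finite \<Rightarrow> 's \<Rightarrow> real"
  assumes st: "stoch Q" and mu: "stationary Q \<mu>" and nr: "\<not> recurrent Q t0"
  shows "\<mu> t0 = 0"
proof -
  have mnn: "\<And>s. 0 \<le> \<mu> s" and ms: "\<And>t. (\<Sum>s\<in>UNIV. \<mu> s * Q s t) = \<mu> t"
    using mu unfolding stationary_def by auto
  have qnn: "\<And>s t. 0 \<le> Q s t" and q1: "\<And>s. (\<Sum>t\<in>UNIV. Q s t) = 1"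
    using st unfolding stoch_def by auto
  define K where "K = {s. 0 < \<mu> s \<and> \<not> recurrent Q s}"
  define qK where "qK s = (\<Sum>t\<in>K. Q s t)" for s
  have qK1: "qK s \<le> 1" for s
  proof -
    have "qK s \<le> (\<Sum>t\<in>UNIV. Q s t)" unfolding qK_def by (rule sum_mono2) (auto simp: qnn)
    then show ?thesis using q1 by simp
  qed
  have "(\<Sum>t\<in>K. \<mu> t) = (\<Sum>t\<in>K. \<Sum>s\<in>UNIV. \<mu> s * Q s t)" using ms by simp
  also have "\<dots> = (\<Sum>s\<in>UNIV. \<Sum>t\<in>K. \<mu> s * Q s t)" by (rule sum.swap)
  also have "\<dots> = (\<Sum>s\<in>UNIV. \<mu> s * qK s)" unfolding qK_def by (simp add: sum_distrib_left)
  also have "\<dots> = (\<Sum>s\<in>UNIV. if s \<in> K then \<mu> s * qK s else 0)"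
  proof (rule sum.cong)
    fix s assume "s \<in> (UNIV :: 's set)"
    show "\<mu> s * qK s = (if s \<in> K then \<mu> s * qK s else 0)"
    proof (cases "s \<in> K")
      case False
      then have "\<mu> s = 0 \<or> recurrent Q s" unfolding K_def using mnn[of s] by auto
      then show ?thesis
      proof
        assume "\<mu> s = 0" then show ?thesis by simp
      next
        assume rs: "recurrent Q s"
        have "Q s t = 0" if "t \<in> K" for t
        proof (rule ccontr)
          assume "Q s t \<noteq> 0"
          then have "0 < Q s t" using qnn[of s t] by simp
          then have "recurrent Q t" using recurrent_reach[OF rs reach_step] by blast
          then show False using that unfolding K_def by simp
        qed
        then have "qK s = 0" unfolding qK_def by simp
        then show ?thesis using False by simp
      qed
    qed simp
  qed simp
  also have "\<dots> = (\<Sum>s\<in>K. \<mu> s * qK s)" by (simp add: sum.If_cases)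
  finally have eq: "(\<Sum>s\<in>K. \<mu> s * (1 - qK s)) = 0" by (simp add: algebra_simps sum_subtractf)
  have tnn: "\<forall>s\<in>K. 0 \<le> \<mu> s * (1 - qK s)" using mnn qK1 by simp
  have qK_one: "qK s = 1" if "s \<in> K" for s
  proof -
    have "\<mu> s * (1 - qK s) = 0" using eq tnn that sum_nonneg_eq_0_iff[of K "\<lambda>s. \<mu> s * (1 - qK s)"] by auto
    moreover have "0 < \<mu> s" using that unfolding K_def by simp
    ultimately show ?thesis by simp
  qed
  have cl: "\<forall>s t. s \<in> K \<longrightarrow> 0 < Q s t \<longrightarrow> t \<in> K"
  proof (intro allI impI)
    fix s t assume sK: "s \<in> K" and q: "0 < Q s t"
    show "t \<in> K"
    proof (rule ccontr)
      assume tK: "t \<notin> K"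
      have "(\<Sum>t\<in>UNIV. Q s t) = (\<Sum>t\<in>UNIV - K. Q s t) + qK s"
        unfolding qK_def by (rule sum.subset_diff) auto
      then have z: "(\<Sum>t\<in>UNIV - K. Q s t) = 0" using q1 qK_one[OF sK] by simp
      have "Q s t = 0" using sum_nonneg_eq_0_iff[of "UNIV - K" "Q s"] z qnn tK by auto
      with q show False by simp
    qed
  qed
  have "K = {}"
  proof (rule ccontr)
    assume "K \<noteq> {}"
    then obtain s where sK: "s \<in> K" by blast
    obtain u where u: "(s,u) \<in> reach Q" "recurrent Q u" using exists_recurrent by blast
    have "u \<in> K" using reach_closed[OF cl u(1) sK] .
    with u(2) show False unfolding K_def by simp
  qed
  then show ?thesis using nr mnn[of t0] unfolding K_def by force
qed

lemma superharm_stationary: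
  fixes Q :: "'s::finite \<Rightarrow> 's \<Rightarrow> real"
  assumes st: "stoch Q" and src: "single_recurrent_class Q" and mu: "stationary Q \<mu>"
    and sh: "\<And>s. (\<Sum>t\<in>UNIV. Q s t * h t) \<le> h s"
  shows "(\<Sum>t\<in>UNIV. \<mu> t * h t) \<le> h s"
proof -
  obtain c where c: "\<forall>u. recurrent Q u \<longrightarrow> h u = c" "\<forall>s. c \<le> h s"
    using superharm_min[OF st src sh] by blast
  have "(\<Sum>t\<in>UNIV. \<mu> t * h t) = (\<Sum>t\<in>UNIV. \<mu> t * c)"
  proof (rule sum.cong)
    fix t assume "t \<in> (UNIV :: 's set)"
    show "\<mu> t * h t = \<mu> t * c"
      using c(1) stationary_support[OF st mu, of t] by (cases "recurrent Q t") auto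
  qed simp
  also have "\<dots> = c" using mu unfolding stationary_def by (simp add: sum_distrib_right[symmetric])
  finally show ?thesis using c(2) by simp
qed


lemma unichain_src: "unichain P \<Longrightarrow> single_recurrent_class (pol_trans P \<pi>)"
  unfolding unichain_def by blast

lemma gain_eq:
  assumes mdp: "is_mdp P" and uc: "unichain P"
    and p: "poisson (pol_trans P \<pi>) (pol_rew r l \<pi>) g b"
  shows "gain P r l \<pi> = g"
  unfolding gain_def
proof (rule the_equality)
  show "\<exists>b. poisson (pol_trans P \<pi>) (pol_rew r l \<pi>) g b" using p by blast
next
  fix g' assume "\<exists>b. poisson (pol_trans P \<pi>) (pol_rew r l \<pi>) g' b"
  then obtain b' where "poisson (pol_trans P \<pi>) (pol_rew r l \<pi>) g' b'" by blast
  then show "g' = g" using poisson_unique[OF stoch_pol[OF mdp] unichain_src[OF uc] _ p] by blast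
qed

lemma gain_bias:
  fixes P :: "bool \<Rightarrow> 's::finite \<Rightarrow> 's \<Rightarrow> real"
  assumes mdp: "is_mdp P" and uc: "unichain P"
  shows "poisson (pol_trans P \<pi>) (pol_rew r l \<pi>) (gain P r l \<pi>) (bias P r l \<pi>)
    \<and> (\<forall>\<mu>. stationary (pol_trans P \<pi>) \<mu> \<longrightarrow> (\<Sum>s\<in>UNIV. \<mu> s * bias P r l \<pi> s) = 0)"
proof -
  let ?Q = "pol_trans P \<pi>" and ?R = "pol_rew r l \<pi>"
  have st: "stoch ?Q" by (rule stoch_pol[OF mdp])
  have src: "single_recurrent_class ?Q" by (rule unichain_src[OF uc])
  obtain g b0 where p0: "poisson ?Q ?R g b0" using poisson_exists[OF st src] by blast
  have g: "gain P r l \<pi> = g" by (rule gain_eq[OF mdp uc p0])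
  obtain \<mu>0 where m0: "stationary ?Q \<mu>0" using stationary_exists[OF st src] by blast
  have m0s: "(\<Sum>s\<in>UNIV. \<mu>0 s) = 1" using m0 unfolding stationary_def by simp
  define c where "c = - (\<Sum>s\<in>UNIV. \<mu>0 s * b0 s)"
  define b where "b s = b0 s + c" for s
  have pb: "poisson ?Q ?R g b" unfolding b_def by (rule poisson_shift[OF st p0])
  have nb: "(\<Sum>s\<in>UNIV. \<mu> s * b s) = 0" if "stationary ?Q \<mu>" for \<mu>
  proof -
    have "\<mu> = \<mu>0" by (rule stationary_unique[OF st src that m0])
    have k: "(\<Sum>s\<in>UNIV. \<mu>0 s * K) = K" for K using m0s by (simp add: sum_distrib_right[symmetric])
    have "(\<Sum>s\<in>UNIV. \<mu>0 s * (b0 s + c)) = (\<Sum>s\<in>UNIV. \<mu>0 s * b0 s) + (\<Sum>s\<in>UNIV. \<mu>0 s * c)"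
      by (simp add: algebra_simps sum.distrib)
    then show ?thesis unfolding b_def using k[of c] \<open>\<mu> = \<mu>0\<close> unfolding c_def by simp
  qed
  have ex1: "\<exists>!b. poisson ?Q ?R (gain P r l \<pi>) b \<and> (\<forall>\<mu>. stationary ?Q \<mu> \<longrightarrow> (\<Sum>s\<in>UNIV. \<mu> s * b s) = 0)"
  proof (rule ex1I[of _ b])
    show "poisson ?Q ?R (gain P r l \<pi>) b \<and> (\<forall>\<mu>. stationary ?Q \<mu> \<longrightarrow> (\<Sum>s\<in>UNIV. \<mu> s * b s) = 0)"
      using pb nb g by blast
  next
    fix b' assume b': "poisson ?Q ?R (gain P r l \<pi>) b' \<and> (\<forall>\<mu>. stationary ?Q \<mu> \<longrightarrow> (\<Sum>s\<in>UNIV. \<mu> s * b' s) = 0)"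
    fix s0 :: 's
    have pb': "poisson ?Q ?R g b'" using b' g by simp
    obtain c0 where eq: "\<And>s. b' s = b s + c0"
      using poisson_unique[OF st src pb' pb, of s0] by blast
    have "(\<Sum>s\<in>UNIV. \<mu>0 s * b' s) = 0" using b' m0 by blast
    moreover have "(\<Sum>s\<in>UNIV. \<mu>0 s * b' s) = (\<Sum>s\<in>UNIV. \<mu>0 s * b s) + (\<Sum>s\<in>UNIV. \<mu>0 s) * c0"
      by (simp add: eq algebra_simps sum.distrib sum_distrib_right sum_distrib_left)
    ultimately have "c0 = 0" using nb[OF m0] m0s by simp
    then show "b' = b" by (simp add: eq fun_eq_iff)
  qed
  show ?thesis using theI'[OF ex1] unfolding bias_def by blast
qed

lemma bias_const:
  assumes mdp: "is_mdp P" and uc: "unichain P"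
    and p: "poisson (pol_trans P \<pi>) (pol_rew r l \<pi>) g b"
  shows "\<exists>c. \<forall>s. bias P r l \<pi> s = b s + c"
proof -
  fix s0
  have gb: "poisson (pol_trans P \<pi>) (pol_rew r l \<pi>) (gain P r l \<pi>) (bias P r l \<pi>)"
    using gain_bias[OF mdp uc] by blast
  show ?thesis
    using poisson_unique[OF stoch_pol[OF mdp] unichain_src[OF uc] gb p, of s0] by blast
qed

definition advb :: "(bool \<Rightarrow> 's::finite \<Rightarrow> 's \<Rightarrow> real) \<Rightarrow> (bool \<Rightarrow> 's \<Rightarrow> real) \<Rightarrow> real \<Rightarrow> ('s \<Rightarrow> real) \<Rightarrow> 's \<Rightarrow> real" where
  "advb P r l b s = r True s - l - r False s + (\<Sum>s'\<in>UNIV. (P True s s' - P False s s') * b s')"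

lemma adv_advb: "adv P r l \<pi> s = advb P r l (bias P r l \<pi>) s"
  unfolding adv_def advb_def by simp

lemma advb_shift:
  assumes mdp: "is_mdp P"
  shows "advb P r l (\<lambda>s. b s + c) s = advb P r l b s"
proof -
  have "(\<Sum>s'\<in>UNIV. P a s s' * c) = c" for a
    using mdp unfolding is_mdp_def by (simp add: sum_distrib_right[symmetric])
  then show ?thesis unfolding advb_def
    by (simp add: algebra_simps sum.distrib sum_subtractf)
qed

definition rvA :: "(bool \<Rightarrow> 's::finite \<Rightarrow> 's \<Rightarrow> real) \<Rightarrow> (bool \<Rightarrow> 's \<Rightarrow> real) \<Rightarrow> real \<Rightarrow> bool \<Rightarrow> ('s \<Rightarrow> real) \<Rightarrow> 's \<Rightarrow> real" where
  "rvA P r l a b s = (if a then r True s - l else r False s) + (\<Sum>t\<in>UNIV. P a s t * b t)"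

lemma advb_rvA: "advb P r l b s = rvA P r l True b s - rvA P r l False b s"
  unfolding advb_def rvA_def by (simp add: algebra_simps sum_subtractf)

lemma poisson_rvA:
  "poisson (pol_trans P \<pi>) (pol_rew r l \<pi>) g b \<longleftrightarrow> (\<forall>s. g + b s = rvA P r l (s \<in> \<pi>) b s)"
  unfolding poisson_def rvA_def pol_trans_def pol_rew_def by simp

definition SC :: "(bool \<Rightarrow> 's::finite \<Rightarrow> 's \<Rightarrow> real) \<Rightarrow> (bool \<Rightarrow> 's \<Rightarrow> real) \<Rightarrow> real \<Rightarrow> 's set \<Rightarrow> bool" where
  "SC P r l \<pi> \<longleftrightarrow> (\<forall>s. (s \<in> \<pi> \<longrightarrow> 0 \<le> adv P r l \<pi> s) \<and> (s \<notin> \<pi> \<longrightarrow> adv P r l \<pi> s \<le> 0))"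

lemma SC_max:
  assumes mdp: "is_mdp P" and uc: "unichain P" and sc: "SC P r l \<pi>"
  shows "rvA P r l a (bias P r l \<pi>) s \<le> gain P r l \<pi> + bias P r l \<pi> s"
proof -
  have e: "gain P r l \<pi> + bias P r l \<pi> s = rvA P r l (s \<in> \<pi>) (bias P r l \<pi>) s"
    using gain_bias[OF mdp uc] unfolding poisson_rvA by blast
  have "s \<in> \<pi> \<longrightarrow> 0 \<le> advb P r l (bias P r l \<pi>) s" "s \<notin> \<pi> \<longrightarrow> advb P r l (bias P r l \<pi>) s \<le> 0"
    using sc unfolding SC_def adv_advb by auto
  then show ?thesis using e unfolding advb_rvA by (cases a; cases "s \<in> \<pi>") auto
qed


lemma rvA_pol: "rvA P r l (s \<in> \<pi>) b s = pol_rew r l \<pi> s + (\<Sum>t\<in>UNIV. pol_trans P \<pi> s t * b t)"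
  unfolding rvA_def pol_rew_def pol_trans_def by simp

lemma pol_improve:
  fixes P :: "bool \<Rightarrow> 's::finite \<Rightarrow> 's \<Rightarrow> real"
  assumes mdp: "is_mdp P" and uc: "unichain P"
    and psi: "\<And>s. \<psi> s = rvA P r l (s \<in> \<pi>') (bias P r l \<pi>) s - (gain P r l \<pi> + bias P r l \<pi> s)"
    and nn: "\<And>s. 0 \<le> \<psi> s"
  shows "gain P r l \<pi> \<le> gain P r l \<pi>'"
    and "gain P r l \<pi>' \<le> gain P r l \<pi> \<Longrightarrow> (\<And>s. (s \<in> \<pi>) \<noteq> (s \<in> \<pi>') \<Longrightarrow> 0 < \<psi> s)
         \<Longrightarrow> bias P r l \<pi> s + \<psi> s \<le> bias P r l \<pi>' s"
proof -
  let ?b = "bias P r l \<pi>" and ?g = "gain P r l \<pi>"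
  let ?b' = "bias P r l \<pi>'" and ?g' = "gain P r l \<pi>'"
  let ?Q = "pol_trans P \<pi>" and ?Q' = "pol_trans P \<pi>'" and ?R' = "pol_rew r l \<pi>'"
  have st': "stoch ?Q'" by (rule stoch_pol[OF mdp])
  have src': "single_recurrent_class ?Q'" by (rule unichain_src[OF uc])
  obtain \<mu> where mu: "stationary ?Q' \<mu>" using stationary_exists[OF st' src'] by blast
  have mnn: "\<And>s. 0 \<le> \<mu> s" and m1: "(\<Sum>s\<in>UNIV. \<mu> s) = 1"
    and ms: "\<And>t. (\<Sum>s\<in>UNIV. \<mu> s * ?Q' s t) = \<mu> t"
    using mu unfolding stationary_def by auto
  have pb': "poisson ?Q' ?R' ?g' ?b'" using gain_bias[OF mdp uc] by blast
  have pq: "poisson ?Q' (\<lambda>s. ?R' s - \<psi> s) ?g ?b"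
    unfolding poisson_def using psi rvA_pol[of P r l _ \<pi>' ?b] by simp
  have e1: "(\<Sum>s\<in>UNIV. \<mu> s * (?R' s - \<psi> s)) = ?g" by (rule stationary_gain[OF mu pq])
  have e2: "(\<Sum>s\<in>UNIV. \<mu> s * ?R' s) = ?g'" by (rule stationary_gain[OF mu pb'])
  have e3: "?g' = ?g + (\<Sum>s\<in>UNIV. \<mu> s * \<psi> s)"
    using e1 e2 by (simp add: algebra_simps sum_subtractf)
  have pnn: "0 \<le> (\<Sum>s\<in>UNIV. \<mu> s * \<psi> s)" using mnn nn by (simp add: sum_nonneg)
  show "?g \<le> ?g'" using e3 pnn by simp
  assume le: "?g' \<le> ?g" and diff: "\<And>s. (s \<in> \<pi>) \<noteq> (s \<in> \<pi>') \<Longrightarrow> 0 < \<psi> s"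
  have z: "(\<Sum>s\<in>UNIV. \<mu> s * \<psi> s) = 0" using e3 le pnn by simp
  have zs: "\<mu> s * \<psi> s = 0" for s
    using z sum_nonneg_eq_0_iff[of UNIV "\<lambda>s. \<mu> s * \<psi> s"] mnn nn by simp
  have muQ: "stationary ?Q \<mu>"
    unfolding stationary_def
  proof (intro conjI allI)
    fix t
    have "(\<Sum>s\<in>UNIV. \<mu> s * ?Q s t) = (\<Sum>s\<in>UNIV. \<mu> s * ?Q' s t)"
    proof (rule sum.cong)
      fix s assume "s \<in> (UNIV :: 's set)"
      show "\<mu> s * ?Q s t = \<mu> s * ?Q' s t"
      proof (cases "(s \<in> \<pi>) = (s \<in> \<pi>')")
        case True then show ?thesis unfolding pol_trans_def by simp
      next
        case False then have "0 < \<psi> s" by (rule diff)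
        then have "\<mu> s = 0" using zs[of s] by simp
        then show ?thesis by simp
      qed
    qed simp
    then show "(\<Sum>s\<in>UNIV. \<mu> s * ?Q s t) = \<mu> t" using ms by simp
  qed (use mnn m1 in auto)
  have nb: "(\<Sum>s\<in>UNIV. \<mu> s * ?b s) = 0" using gain_bias[OF mdp uc, where r=r and l=l and \<pi>=\<pi>] muQ by blast
  have nb': "(\<Sum>s\<in>UNIV. \<mu> s * ?b' s) = 0" using gain_bias[OF mdp uc, where r=r and l=l and \<pi>=\<pi>'] mu by blast
  have geq: "?g' = ?g" using e3 z by simp
  have pd: "poisson ?Q' \<psi> 0 (\<lambda>s. ?b' s - ?b s)"
    using poisson_diff[OF pb' pq] geq by simp
  have dq: "0 + (?b' x - ?b x) = \<psi> x + (\<Sum>t\<in>UNIV. ?Q' x t * (?b' t - ?b t))" for x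
    using pd unfolding poisson_def by blast
  have sh: "(\<Sum>t\<in>UNIV. ?Q' x t * (?b' t - ?b t)) \<le> ?b' x - ?b x" for x
    using dq[of x] nn[of x] by simp
  have "(\<Sum>t\<in>UNIV. \<mu> t * (?b' t - ?b t)) \<le> ?b' x - ?b x" for x
    by (rule superharm_stationary[OF st' src' mu sh])
  moreover have "(\<Sum>t\<in>UNIV. \<mu> t * (?b' t - ?b t)) = 0"
    using nb nb' by (simp add: algebra_simps sum_subtractf)
  ultimately have dnn: "0 \<le> ?b' x - ?b x" for x by force
  have "0 \<le> (\<Sum>t\<in>UNIV. ?Q' s t * (?b' t - ?b t))"
    using st' dnn unfolding stoch_def by (simp add: sum_nonneg)
  then show "?b s + \<psi> s \<le> ?b' s" using dq[of s] by simp
qed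

definition flip :: "'s set \<Rightarrow> 's \<Rightarrow> 's set" where
  "flip \<pi> s0 = (if s0 \<in> \<pi> then \<pi> - {s0} else insert s0 \<pi>)"

lemma mem_flip: "(s \<in> flip \<pi> s0) = (if s = s0 then s0 \<notin> \<pi> else s \<in> \<pi>)"
  unfolding flip_def by auto

definition improvable :: "(bool \<Rightarrow> 's::finite \<Rightarrow> 's \<Rightarrow> real) \<Rightarrow> (bool \<Rightarrow> 's \<Rightarrow> real) \<Rightarrow> real \<Rightarrow> 's set \<Rightarrow> 's \<Rightarrow> bool" where
  "improvable P r l \<pi> s0 \<longleftrightarrow> (if s0 \<in> \<pi> then adv P r l \<pi> s0 < 0 else 0 < adv P r l \<pi> s0)"

lemma not_SC: "\<not> SC P r l \<pi> \<Longrightarrow> \<exists>s0. improvable P r l \<pi> s0"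
proof -
  assume "\<not> SC P r l \<pi>"
  then obtain s where "\<not> ((s \<in> \<pi> \<longrightarrow> 0 \<le> adv P r l \<pi> s) \<and> (s \<notin> \<pi> \<longrightarrow> adv P r l \<pi> s \<le> 0))"
    unfolding SC_def by blast
  then show ?thesis unfolding improvable_def by (intro exI[of _ s]) auto
qed

lemma flip_improve:
  fixes P :: "bool \<Rightarrow> 's::finite \<Rightarrow> 's \<Rightarrow> real"
  assumes mdp: "is_mdp P" and uc: "unichain P" and imp: "improvable P r l \<pi> s0"
  shows "gain P r l \<pi> \<le> gain P r l (flip \<pi> s0)"
    and "gain P r l (flip \<pi> s0) \<le> gain P r l \<pi> \<Longrightarrow>
          bias P r l \<pi> s0 < bias P r l (flip \<pi> s0) s0 \<and> (\<forall>s. bias P r l \<pi> s \<le> bias P r l (flip \<pi> s0) s)"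
proof -
  let ?b = "bias P r l \<pi>" and ?g = "gain P r l \<pi>"
  define \<psi> where "\<psi> s = rvA P r l (s \<in> flip \<pi> s0) ?b s - (?g + ?b s)" for s
  have pe: "?g + ?b s = rvA P r l (s \<in> \<pi>) ?b s" for s
    using gain_bias[OF mdp uc, where r=r and l=l and \<pi>=\<pi>] unfolding poisson_rvA by blast
  have ps: "\<psi> s = (if s = s0 then (if s0 \<in> \<pi> then - adv P r l \<pi> s0 else adv P r l \<pi> s0) else 0)" for s
    unfolding \<psi>_def mem_flip adv_advb advb_rvA using pe[of s] by auto
  have nn: "0 \<le> \<psi> s" for s using imp unfolding ps improvable_def by (auto split: if_splits)
  have pos: "0 < \<psi> s0" using imp unfolding ps improvable_def by (auto split: if_splits)
  show "?g \<le> gain P r l (flip \<pi> s0)" by (rule pol_improve(1)[OF mdp uc \<psi>_def nn])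
  assume le: "gain P r l (flip \<pi> s0) \<le> ?g"
  have dif: "0 < \<psi> s" if "(s \<in> \<pi>) \<noteq> (s \<in> flip \<pi> s0)" for s
  proof -
    have "s = s0" using that unfolding mem_flip by (auto split: if_splits)
    then show ?thesis using pos by simp
  qed
  have b: "?b s + \<psi> s \<le> bias P r l (flip \<pi> s0) s" for s
    by (rule pol_improve(2)[OF mdp uc \<psi>_def nn le dif])
  show "?b s0 < bias P r l (flip \<pi> s0) s0 \<and> (\<forall>s. ?b s \<le> bias P r l (flip \<pi> s0) s)"
  proof
    show "?b s0 < bias P r l (flip \<pi> s0) s0" using b[of s0] pos by linarith
    show "\<forall>s. ?b s \<le> bias P r l (flip \<pi> s0) s"
    proof
      fix s show "?b s \<le> bias P r l (flip \<pi> s0) s" using b[of s] nn[of s] by linarith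
    qed
  qed
qed

lemma BO_SC:
  assumes mdp: "is_mdp P" and uc: "unichain P" and bo: "bias_optimal P r l \<pi>"
  shows "SC P r l \<pi>"
proof (rule ccontr)
  assume "\<not> SC P r l \<pi>"
  then obtain s0 where imp: "improvable P r l \<pi> s0" using not_SC by blast
  have go: "\<And>\<pi>'. gain P r l \<pi>' \<le> gain P r l \<pi>" using bo unfolding bias_optimal_def gain_optimal_def by blast
  have g1: "gain P r l \<pi> \<le> gain P r l (flip \<pi> s0)" by (rule flip_improve(1)[OF mdp uc imp])
  have "bias P r l \<pi> s0 < bias P r l (flip \<pi> s0) s0"
    using flip_improve(2)[OF mdp uc imp go] by blast
  moreover have "gain_optimal P r l (flip \<pi> s0)" unfolding gain_optimal_def using go g1 by (meson order_trans)
  then have "bias P r l (flip \<pi> s0) s0 \<le> bias P r l \<pi> s0" using bo unfolding bias_optimal_def by blast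
  ultimately show False by simp
qed

lemma SC_gain_opt:
  fixes P :: "bool \<Rightarrow> 's::finite \<Rightarrow> 's \<Rightarrow> real"
  assumes mdp: "is_mdp P" and uc: "unichain P" and sc: "SC P r l \<pi>"
  shows "gain P r l \<pi>' \<le> gain P r l \<pi>"
proof -
  let ?b = "bias P r l \<pi>" and ?g = "gain P r l \<pi>"
  let ?Q' = "pol_trans P \<pi>'" and ?R' = "pol_rew r l \<pi>'"
  define \<psi> where "\<psi> s = rvA P r l (s \<in> \<pi>') ?b s - (?g + ?b s)" for s
  have np: "\<psi> s \<le> 0" for s unfolding \<psi>_def using SC_max[OF mdp uc sc] by simp
  obtain \<mu> where mu: "stationary ?Q' \<mu>"
    using stationary_exists[OF stoch_pol[OF mdp] unichain_src[OF uc]] by blast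
  have mnn: "\<And>s. 0 \<le> \<mu> s" using mu unfolding stationary_def by auto
  have pb': "poisson ?Q' ?R' (gain P r l \<pi>') (bias P r l \<pi>')" using gain_bias[OF mdp uc] by blast
  have pq: "poisson ?Q' (\<lambda>s. ?R' s - \<psi> s) ?g ?b"
    unfolding poisson_def using \<psi>_def rvA_pol[of P r l _ \<pi>' ?b] by simp
  have e1: "(\<Sum>s\<in>UNIV. \<mu> s * (?R' s - \<psi> s)) = ?g" by (rule stationary_gain[OF mu pq])
  have e2: "(\<Sum>s\<in>UNIV. \<mu> s * ?R' s) = gain P r l \<pi>'" by (rule stationary_gain[OF mu pb'])
  have "(\<Sum>s\<in>UNIV. \<mu> s * \<psi> s) \<le> 0" using mnn np by (simp add: sum_nonpos mult_nonneg_nonpos)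
  then show ?thesis using e1 e2 by (simp add: algebra_simps sum_subtractf)
qed


lemma min_closed:
  fixes Q :: "'s::finite \<Rightarrow> 's \<Rightarrow> real"
  assumes st: "stoch Q" and mle: "\<And>t. m \<le> h t" and hs: "h s = m"
    and sh: "(\<Sum>t\<in>UNIV. Q s t * h t) \<le> h s" and q: "0 < Q s t"
  shows "h t = m"
proof -
  have "(\<Sum>t\<in>UNIV. Q s t * (h t - m)) = (\<Sum>t\<in>UNIV. Q s t * h t) - m"
    using stoch_sum_const[OF st, of s m] by (simp add: algebra_simps sum_subtractf)
  also have "\<dots> \<le> 0" using sh hs by simp
  finally have le0: "(\<Sum>t\<in>UNIV. Q s t * (h t - m)) \<le> 0" .
  have nn: "\<forall>t\<in>UNIV. 0 \<le> Q s t * (h t - m)" using st mle unfolding stoch_def by simp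
  have "(\<Sum>t\<in>UNIV. Q s t * (h t - m)) = 0" using le0 nn by (simp add: sum_nonneg order_antisym)
  then have "Q s t * (h t - m) = 0" using sum_nonneg_eq_0_iff[of UNIV "\<lambda>t. Q s t * (h t - m)"] nn by simp
  with q show ?thesis by simp
qed

lemma lexmax_BO_aux:
  fixes P :: "bool \<Rightarrow> 's::finite \<Rightarrow> 's \<Rightarrow> real"
  assumes mdp: "is_mdp P" and uc: "unichain P" and sc: "SC P r l \<pi>s"
    and g2: "gain P r l \<pi>2 = gain P r l \<pi>s"
    and lex: "\<And>\<pi>. gain P r l \<pi> = gain P r l \<pi>s \<Longrightarrow>
                 (\<Sum>s\<in>UNIV. bias P r l \<pi> s) \<le> (\<Sum>s\<in>UNIV. bias P r l \<pi>s s)"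
  shows "bias P r l \<pi>2 x \<le> bias P r l \<pi>s x"
proof -
  let ?b = "bias P r l \<pi>s" and ?g = "gain P r l \<pi>s"
  let ?b2 = "bias P r l \<pi>2"
  let ?Q2 = "pol_trans P \<pi>2" and ?R2 = "pol_rew r l \<pi>2"
  have st2: "stoch ?Q2" by (rule stoch_pol[OF mdp])
  have src2: "single_recurrent_class ?Q2" by (rule unichain_src[OF uc])
  obtain \<mu> where mu: "stationary ?Q2 \<mu>" using stationary_exists[OF st2 src2] by blast
  have mnn: "\<And>s. 0 \<le> \<mu> s" and m1: "(\<Sum>s\<in>UNIV. \<mu> s) = 1"
    and ms: "\<And>t. (\<Sum>s\<in>UNIV. \<mu> s * ?Q2 s t) = \<mu> t"
    using mu unfolding stationary_def by auto
  define \<phi> where "\<phi> s = ?g + ?b s - rvA P r l (s \<in> \<pi>2) ?b s" for s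
  have pnn: "0 \<le> \<phi> s" for s unfolding \<phi>_def using SC_max[OF mdp uc sc] by simp
  have pq: "poisson ?Q2 (\<lambda>s. ?R2 s + \<phi> s) ?g ?b"
    unfolding poisson_def using \<phi>_def rvA_pol[of P r l _ \<pi>2 ?b] by simp
  have pb2: "poisson ?Q2 ?R2 ?g ?b2" using gain_bias[OF mdp uc, where \<pi>=\<pi>2 and r=r and l=l] g2 by simp
  have e1: "(\<Sum>s\<in>UNIV. \<mu> s * (?R2 s + \<phi> s)) = ?g" by (rule stationary_gain[OF mu pq])
  have e2: "(\<Sum>s\<in>UNIV. \<mu> s * ?R2 s) = ?g" by (rule stationary_gain[OF mu pb2])
  have z: "(\<Sum>s\<in>UNIV. \<mu> s * \<phi> s) = 0" using e1 e2 by (simp add: algebra_simps sum.distrib)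
  have zs: "\<mu> s * \<phi> s = 0" for s
    using z sum_nonneg_eq_0_iff[of UNIV "\<lambda>s. \<mu> s * \<phi> s"] mnn pnn by simp
  define \<pi>3 where "\<pi>3 = {s. (0 < \<mu> s \<and> s \<in> \<pi>2) \<or> (\<not> 0 < \<mu> s \<and> s \<in> \<pi>s)}"
  have mem3: "(s \<in> \<pi>3) = (if 0 < \<mu> s then s \<in> \<pi>2 else s \<in> \<pi>s)" for s
    unfolding \<pi>3_def by auto
  have pe: "?g + ?b s = rvA P r l (s \<in> \<pi>s) ?b s" for s
    using gain_bias[OF mdp uc, where \<pi>=\<pi>s and r=r and l=l] unfolding poisson_rvA by blast
  have p3: "poisson (pol_trans P \<pi>3) (pol_rew r l \<pi>3) ?g ?b"
    unfolding poisson_rvA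
  proof
    fix s
    show "?g + ?b s = rvA P r l (s \<in> \<pi>3) ?b s"
    proof (cases "0 < \<mu> s")
      case True
      then have "\<phi> s = 0" using zs[of s] by simp
      then show ?thesis using True unfolding mem3 \<phi>_def by simp
    next
      case False
      then show ?thesis using pe[of s] unfolding mem3 by simp
    qed
  qed
  have g3: "gain P r l \<pi>3 = ?g" by (rule gain_eq[OF mdp uc p3])
  obtain c where c: "\<And>s. bias P r l \<pi>3 s = ?b s + c" using bias_const[OF mdp uc p3] by blast
  have mu3: "stationary (pol_trans P \<pi>3) \<mu>"
    unfolding stationary_def
  proof (intro conjI allI)
    fix t
    have "(\<Sum>s\<in>UNIV. \<mu> s * pol_trans P \<pi>3 s t) = (\<Sum>s\<in>UNIV. \<mu> s * ?Q2 s t)"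
    proof (rule sum.cong)
      fix s assume "s \<in> (UNIV :: 's set)"
      show "\<mu> s * pol_trans P \<pi>3 s t = \<mu> s * ?Q2 s t"
      proof (cases "0 < \<mu> s")
        case True then show ?thesis unfolding pol_trans_def mem3 by simp
      next
        case False then have "\<mu> s = 0" using mnn[of s] by simp
        then show ?thesis by simp
      qed
    qed simp
    then show "(\<Sum>s\<in>UNIV. \<mu> s * pol_trans P \<pi>3 s t) = \<mu> t" using ms by simp
  qed (use mnn m1 in auto)
  have "(\<Sum>s\<in>UNIV. \<mu> s * bias P r l \<pi>3 s) = 0"
    using gain_bias[OF mdp uc, where \<pi>=\<pi>3 and r=r and l=l] mu3 by blast
  then have "(\<Sum>s\<in>UNIV. \<mu> s * ?b s) + c = 0"
    using m1 by (simp add: c algebra_simps sum.distrib sum_distrib_left[symmetric] sum_distrib_right[symmetric])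
  then have cb: "(\<Sum>s\<in>UNIV. \<mu> s * ?b s) = - c" by simp
  have "(\<Sum>s\<in>UNIV. bias P r l \<pi>3 s) \<le> (\<Sum>s\<in>UNIV. ?b s)" by (rule lex[OF g3])
  then have "real (card (UNIV :: 's set)) * c \<le> 0" by (simp add: c sum.distrib)
  moreover have "0 < card (UNIV :: 's set)" by (simp add: card_gt_0_iff)
  ultimately have cle: "c \<le> 0" by (simp add: mult_le_0_iff)
  have pd: "poisson ?Q2 \<phi> 0 (\<lambda>s. ?b s - ?b2 s)" using poisson_diff[OF pq pb2] by simp
  have dq: "0 + (?b s - ?b2 s) = \<phi> s + (\<Sum>t\<in>UNIV. ?Q2 s t * (?b t - ?b2 t))" for s
    using pd unfolding poisson_def by blast
  have sh: "(\<Sum>t\<in>UNIV. ?Q2 s t * (?b t - ?b2 t)) \<le> ?b s - ?b2 s" for s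
    using dq[of s] pnn[of s] by simp
  have "(\<Sum>t\<in>UNIV. \<mu> t * (?b t - ?b2 t)) \<le> ?b x - ?b2 x"
    by (rule superharm_stationary[OF st2 src2 mu sh])
  moreover have "(\<Sum>s\<in>UNIV. \<mu> s * ?b2 s) = 0"
    using gain_bias[OF mdp uc, where \<pi>=\<pi>2 and r=r and l=l] mu by blast
  ultimately have "- c \<le> ?b x - ?b2 x" using cb by (simp add: algebra_simps sum_subtractf)
  then show ?thesis using cle by simp
qed

lemma exists_BO_SC:
  fixes P :: "bool \<Rightarrow> 's::finite \<Rightarrow> 's \<Rightarrow> real"
  assumes mdp: "is_mdp P" and uc: "unichain P"
  shows "\<exists>\<pi>. bias_optimal P r l \<pi> \<and> SC P r l \<pi>"
proof -
  define G where "G = Max (range (gain P r l))"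
  have gle: "gain P r l \<pi> \<le> G" for \<pi> unfolding G_def by simp
  have "G \<in> range (gain P r l)" unfolding G_def by (rule Max_in) auto
  then obtain \<pi>0 where p0: "gain P r l \<pi>0 = G" by auto
  define Gopt where "Gopt = {\<pi>. gain P r l \<pi> = G}"
  define sb where "sb \<pi> = (\<Sum>s\<in>UNIV. bias P r l \<pi> s)" for \<pi>
  define M2 where "M2 = Max (sb ` Gopt)"
  have fin: "finite (sb ` Gopt)" by simp
  have "M2 \<in> sb ` Gopt" unfolding M2_def by (rule Max_in[OF fin]) (use p0 Gopt_def in auto)
  then obtain \<pi>s where ps: "gain P r l \<pi>s = G" "sb \<pi>s = M2" unfolding Gopt_def by auto
  have sble: "sb \<pi> \<le> M2" if "gain P r l \<pi> = G" for \<pi>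
    unfolding M2_def using that Gopt_def fin by (intro Max_ge) auto
  have sc: "SC P r l \<pi>s"
  proof (rule ccontr)
    assume "\<not> SC P r l \<pi>s"
    then obtain s0 where imp: "improvable P r l \<pi>s s0" using not_SC by blast
    have "G \<le> gain P r l (flip \<pi>s s0)" using flip_improve(1)[OF mdp uc imp] ps by simp
    then have gf: "gain P r l (flip \<pi>s s0) = G" using gle by (meson order_antisym)
    then have "bias P r l \<pi>s s0 < bias P r l (flip \<pi>s s0) s0 \<and> (\<forall>s. bias P r l \<pi>s s \<le> bias P r l (flip \<pi>s s0) s)"
      using flip_improve(2)[OF mdp uc imp] ps by simp
    then have "sb \<pi>s < sb (flip \<pi>s s0)" unfolding sb_def
      by (intro sum_strict_mono_ex1) auto
    with sble[OF gf] ps show False by simp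
  qed
  have "bias_optimal P r l \<pi>s"
    unfolding bias_optimal_def gain_optimal_def
  proof (intro conjI allI impI)
    fix \<pi> show "gain P r l \<pi> \<le> gain P r l \<pi>s" using gle ps by simp
  next
    fix \<pi>2 s assume "\<forall>\<pi>'. gain P r l \<pi>' \<le> gain P r l \<pi>2"
    then have "gain P r l \<pi>s \<le> gain P r l \<pi>2" by blast
    then have g2: "gain P r l \<pi>2 = gain P r l \<pi>s" using gle[of \<pi>2] ps by simp
    show "bias P r l \<pi>2 s \<le> bias P r l \<pi>s s"
      by (rule lexmax_BO_aux[OF mdp uc sc g2]) (use sble ps sb_def in auto)
  qed
  with sc show ?thesis by blast
qed


lemma advb_cong: "(\<And>s. b s = b' s) \<Longrightarrow> advb P r l b x = advb P r l b' x"
  unfolding advb_def by simp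

lemma OE_unique:
  fixes P :: "bool \<Rightarrow> 's::finite \<Rightarrow> 's \<Rightarrow> real"
  assumes mdp: "is_mdp P" and uc: "unichain P" and sc1: "SC P r l \<pi>1" and sc2: "SC P r l \<pi>2"
  shows "\<exists>c. \<forall>s. bias P r l \<pi>1 s = bias P r l \<pi>2 s + c"
proof -
  let ?b1 = "bias P r l \<pi>1" and ?b2 = "bias P r l \<pi>2"
  let ?Q1 = "pol_trans P \<pi>1" and ?Q2 = "pol_trans P \<pi>2"
  have geq: "gain P r l \<pi>1 = gain P r l \<pi>2"
    using SC_gain_opt[OF mdp uc sc1, of \<pi>2] SC_gain_opt[OF mdp uc sc2, of \<pi>1] by simp
  let ?g = "gain P r l \<pi>1"
  define d where "d s = ?b1 s - ?b2 s" for s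
  have e1: "?g + ?b1 s = rvA P r l (s \<in> \<pi>1) ?b1 s" for s
    using gain_bias[OF mdp uc, where \<pi>=\<pi>1 and r=r and l=l] unfolding poisson_rvA by blast
  have e2: "?g + ?b2 s = rvA P r l (s \<in> \<pi>2) ?b2 s" for s
    using gain_bias[OF mdp uc, where \<pi>=\<pi>2 and r=r and l=l] geq unfolding poisson_rvA by simp
  have i1: "rvA P r l (s \<in> \<pi>2) ?b1 s \<le> ?g + ?b1 s" for s by (rule SC_max[OF mdp uc sc1])
  have i2: "rvA P r l (s \<in> \<pi>1) ?b2 s \<le> ?g + ?b2 s" for s
    using SC_max[OF mdp uc sc2] geq by simp
  have h2: "(\<Sum>t\<in>UNIV. ?Q2 s t * d t) \<le> d s" for s
  proof -
    have "rvA P r l (s \<in> \<pi>2) ?b1 s - rvA P r l (s \<in> \<pi>2) ?b2 s = (\<Sum>t\<in>UNIV. ?Q2 s t * d t)"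
      unfolding rvA_pol d_def by (simp add: algebra_simps sum_subtractf)
    then show ?thesis using i1[of s] e2[of s] unfolding d_def by simp
  qed
  have h1: "(\<Sum>t\<in>UNIV. ?Q1 s t * (- d t)) \<le> - d s" for s
  proof -
    have "rvA P r l (s \<in> \<pi>1) ?b2 s - rvA P r l (s \<in> \<pi>1) ?b1 s = (\<Sum>t\<in>UNIV. ?Q1 s t * (- d t))"
      unfolding rvA_pol d_def by (simp add: algebra_simps sum_subtractf)
    then show ?thesis using i2[of s] e1[of s] unfolding d_def by simp
  qed
  define m where "m = Min (range d)"
  define Mx where "Mx = Max (range d)"
  have mle: "m \<le> d t" for t unfolding m_def by simp
  have Mge: "d t \<le> Mx" for t unfolding Mx_def by simp
  have "m \<in> range d" unfolding m_def by (rule Min_in) auto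
  then obtain smin where smin: "d smin = m" by auto
  have "Mx \<in> range d" unfolding Mx_def by (rule Max_in) auto
  then obtain smax where smax: "d smax = Mx" by auto
  have "m = Mx"
  proof (rule ccontr)
    assume ne: "m \<noteq> Mx"
    define \<pi>3 where "\<pi>3 = {s. (d s = m \<and> s \<in> \<pi>2) \<or> (d s \<noteq> m \<and> s \<in> \<pi>1)}"
    let ?Q3 = "pol_trans P \<pi>3"
    have r3a: "?Q3 s = ?Q2 s" if "d s = m" for s using that unfolding pol_trans_def \<pi>3_def by simp
    have r3b: "?Q3 s = ?Q1 s" if "d s = Mx" for s using that ne unfolding pol_trans_def \<pi>3_def by simp
    have clM: "\<forall>s t. s \<in> {s. d s = m} \<longrightarrow> 0 < ?Q3 s t \<longrightarrow> t \<in> {s. d s = m}"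
    proof (intro allI impI)
      fix s t assume s: "s \<in> {s. d s = m}" and q: "0 < ?Q3 s t"
      have q2: "0 < ?Q2 s t" using q r3a[of s] s by simp
      have "d t = m"
        by (rule min_closed[where Q="?Q2" and h=d and m=m and s=s and t=t, OF stoch_pol[OF mdp] mle _ h2 q2])
           (use s in simp)
      then show "t \<in> {s. d s = m}" by simp
    qed
    have clMx: "\<forall>s t. s \<in> {s. d s = Mx} \<longrightarrow> 0 < ?Q3 s t \<longrightarrow> t \<in> {s. d s = Mx}"
    proof (intro allI impI)
      fix s t assume s: "s \<in> {s. d s = Mx}" and q: "0 < ?Q3 s t"
      have mle': "- Mx \<le> - d t" for t using Mge[of t] by simp
      have q1: "0 < ?Q1 s t" using q r3b[of s] s by simp
      have "(\<lambda>x. - d x) t = - Mx"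
        by (rule min_closed[where Q="?Q1" and h="\<lambda>x. - d x" and m="- Mx" and s=s and t=t, OF stoch_pol[OF mdp] mle' _ h1 q1])
           (use s in simp)
      then show "t \<in> {s. d s = Mx}" by simp
    qed
    obtain u where u: "(smin,u) \<in> reach ?Q3" "recurrent ?Q3 u" using exists_recurrent by blast
    obtain u' where u': "(smax,u') \<in> reach ?Q3" "recurrent ?Q3 u'" using exists_recurrent by blast
    have uM: "u \<in> {s. d s = m}" by (rule reach_closed[OF clM u(1)]) (use smin in simp)
    have uM': "u' \<in> {s. d s = Mx}" by (rule reach_closed[OF clMx u'(1)]) (use smax in simp)
    have "(u,u') \<in> reach ?Q3" using unichain_src[OF uc, of \<pi>3] u(2) u'(2)
      unfolding single_recurrent_class_def by blast
    then have "u' \<in> {s. d s = m}" by (rule reach_closed[OF clM _ uM])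
    then show False using uM' ne by simp
  qed
  then have "d s = m" for s using mle[of s] Mge[of s] by simp
  then show ?thesis unfolding d_def by (intro exI[of _ m]) (auto simp: algebra_simps)
qed

lemma opt_adv_SC:
  fixes P :: "bool \<Rightarrow> 's::finite \<Rightarrow> 's \<Rightarrow> real"
  assumes mdp: "is_mdp P" and uc: "unichain P" and sc: "SC P r l \<pi>"
  shows "opt_adv P r l s = adv P r l \<pi> s"
proof -
  obtain \<pi>s where "bias_optimal P r l \<pi>s" using exists_BO_SC[OF mdp uc] by blast
  then have bo: "bias_optimal P r l (SOME \<pi>. bias_optimal P r l \<pi>)" by (rule someI)
  define \<pi>o where "\<pi>o = (SOME \<pi>. bias_optimal P r l \<pi>)"
  have sco: "SC P r l \<pi>o" using BO_SC[OF mdp uc bo] unfolding \<pi>o_def .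
  obtain c where c: "\<And>s. bias P r l \<pi>o s = bias P r l \<pi> s + c" using OE_unique[OF mdp uc sco sc] by blast
  have "opt_adv P r l s = advb P r l (bias P r l \<pi>o) s" unfolding opt_adv_def adv_advb \<pi>o_def by simp
  also have "\<dots> = advb P r l (\<lambda>s. bias P r l \<pi> s + c) s" by (rule advb_cong) (rule c)
  also have "\<dots> = adv P r l \<pi> s" unfolding adv_advb by (rule advb_shift[OF mdp])
  finally show ?thesis .
qed

lemma exists_SC: "is_mdp P \<Longrightarrow> unichain P \<Longrightarrow> \<exists>\<pi>. SC P r l \<pi>"
  using exists_BO_SC by blast

lemma adv_affine:
  fixes P :: "bool \<Rightarrow> 's::finite \<Rightarrow> 's \<Rightarrow> real"
  assumes mdp: "is_mdp P" and uc: "unichain P"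
  shows "adv P r l \<pi> s = adv P r 0 \<pi> s + l * (adv P r 1 \<pi> s - adv P r 0 \<pi> s)"
proof -
  let ?Q = "pol_trans P \<pi>"
  let ?b0 = "bias P r 0 \<pi>" and ?b1 = "bias P r 1 \<pi>"
  have p0: "poisson ?Q (pol_rew r 0 \<pi>) (gain P r 0 \<pi>) ?b0" using gain_bias[OF mdp uc] by blast
  have p1: "poisson ?Q (pol_rew r 1 \<pi>) (gain P r 1 \<pi>) ?b1" using gain_bias[OF mdp uc] by blast
  have rw: "(\<lambda>s. (1 - l) * pol_rew r 0 \<pi> s + l * pol_rew r 1 \<pi> s) = pol_rew r l \<pi>"
    by (auto simp: pol_rew_def fun_eq_iff algebra_simps)
  have "poisson ?Q (pol_rew r l \<pi>) ((1 - l) * gain P r 0 \<pi> + l * gain P r 1 \<pi>) (\<lambda>s. (1 - l) * ?b0 s + l * ?b1 s)"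
    using poisson_lin[OF p0 p1, where x="1-l" and y=l] unfolding rw .
  then obtain c where c: "\<And>s. bias P r l \<pi> s = (1 - l) * ?b0 s + l * ?b1 s + c"
    using bias_const[OF mdp uc] by blast
  have "adv P r l \<pi> s = advb P r l (\<lambda>s. (1 - l) * ?b0 s + l * ?b1 s + c) s"
    unfolding adv_advb by (rule advb_cong) (rule c)
  also have "\<dots> = advb P r l (\<lambda>s. (1 - l) * ?b0 s + l * ?b1 s) s" by (rule advb_shift[OF mdp])
  also have "\<dots> = (1 - l) * advb P r 0 ?b0 s + l * advb P r 1 ?b1 s"
  proof -
    let ?D = "\<lambda>t. P True s t - P False s t"
    have "(\<Sum>t\<in>UNIV. ?D t * ((1 - l) * ?b0 t + l * ?b1 t))
        = (\<Sum>t\<in>UNIV. (1 - l) * (?D t * ?b0 t) + l * (?D t * ?b1 t))"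
      by (rule sum.cong) (simp_all add: algebra_simps)
    also have "\<dots> = (1 - l) * (\<Sum>t\<in>UNIV. ?D t * ?b0 t) + l * (\<Sum>t\<in>UNIV. ?D t * ?b1 t)"
      by (simp add: sum.distrib sum_distrib_left)
    finally have X: "(\<Sum>t\<in>UNIV. ?D t * ((1 - l) * ?b0 t + l * ?b1 t))
        = (1 - l) * (\<Sum>t\<in>UNIV. ?D t * ?b0 t) + l * (\<Sum>t\<in>UNIV. ?D t * ?b1 t)" .
    show ?thesis unfolding advb_def X by (simp add: algebra_simps)
  qed
  finally show ?thesis unfolding adv_advb by (simp add: algebra_simps)
qed

lemma adv_UNIV:
  fixes P :: "bool \<Rightarrow> 's::finite \<Rightarrow> 's \<Rightarrow> real"
  assumes mdp: "is_mdp P" and uc: "unichain P"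
  shows "adv P r l UNIV s = adv P r 0 UNIV s - l"
proof -
  let ?Q = "pol_trans P UNIV" and ?b0 = "bias P r 0 UNIV"
  have p0: "poisson ?Q (pol_rew r 0 UNIV) (gain P r 0 UNIV) ?b0" using gain_bias[OF mdp uc] by blast
  have "poisson ?Q (pol_rew r l UNIV) (gain P r 0 UNIV - l) ?b0"
    using p0 unfolding poisson_def pol_rew_def by simp
  then obtain c where c: "\<And>s. bias P r l UNIV s = ?b0 s + c" using bias_const[OF mdp uc] by blast
  have "adv P r l UNIV s = advb P r l (\<lambda>s. ?b0 s + c) s" unfolding adv_advb by (rule advb_cong) (rule c)
  also have "\<dots> = advb P r l ?b0 s" by (rule advb_shift[OF mdp])
  finally show ?thesis unfolding adv_advb advb_def by simp
qed

lemma adv_empty: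
  fixes P :: "bool \<Rightarrow> 's::finite \<Rightarrow> 's \<Rightarrow> real"
  assumes mdp: "is_mdp P" and uc: "unichain P"
  shows "adv P r l {} s = adv P r 0 {} s - l"
proof -
  let ?Q = "pol_trans P {}" and ?b0 = "bias P r 0 {}"
  have p0: "poisson ?Q (pol_rew r 0 {}) (gain P r 0 {}) ?b0" using gain_bias[OF mdp uc] by blast
  have "poisson ?Q (pol_rew r l {}) (gain P r 0 {}) ?b0"
    using p0 unfolding poisson_def pol_rew_def by simp
  then obtain c where c: "\<And>s. bias P r l {} s = ?b0 s + c" using bias_const[OF mdp uc] by blast
  have "adv P r l {} s = advb P r l (\<lambda>s. ?b0 s + c) s" unfolding adv_advb by (rule advb_cong) (rule c)
  also have "\<dots> = advb P r l ?b0 s" by (rule advb_shift[OF mdp])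
  finally show ?thesis unfolding adv_advb advb_def by simp
qed

lemma adv_switch:
  fixes P :: "bool \<Rightarrow> 's::finite \<Rightarrow> 's \<Rightarrow> real"
  assumes mdp: "is_mdp P" and uc: "unichain P" and z: "adv P r l \<pi> s0 = 0"
  shows "adv P r l (flip \<pi> s0) t = adv P r l \<pi> t"
proof -
  let ?b = "bias P r l \<pi>" and ?g = "gain P r l \<pi>"
  have pe: "?g + ?b s = rvA P r l (s \<in> \<pi>) ?b s" for s
    using gain_bias[OF mdp uc, where \<pi>=\<pi> and r=r and l=l] unfolding poisson_rvA by blast
  have z': "rvA P r l True ?b s0 = rvA P r l False ?b s0" using z unfolding adv_advb advb_rvA by simp
  have "poisson (pol_trans P (flip \<pi> s0)) (pol_rew r l (flip \<pi> s0)) ?g ?b"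
    unfolding poisson_rvA
  proof
    fix s show "?g + ?b s = rvA P r l (s \<in> flip \<pi> s0) ?b s"
      using pe[of s] z' unfolding mem_flip by (cases "s = s0"; cases "s0 \<in> \<pi>") auto
  qed
  then obtain c where c: "\<And>s. bias P r l (flip \<pi> s0) s = ?b s + c" using bias_const[OF mdp uc] by blast
  have "adv P r l (flip \<pi> s0) t = advb P r l (\<lambda>s. ?b s + c) t" unfolding adv_advb by (rule advb_cong) (rule c)
  also have "\<dots> = adv P r l \<pi> t" unfolding adv_advb by (rule advb_shift[OF mdp])
  finally show ?thesis .
qed


lemma src_reach: "reach Q1 = reach Q2 \<Longrightarrow> single_recurrent_class Q1 = single_recurrent_class Q2"
  unfolding single_recurrent_class_def recurrent_def by simp

lemma same_support_unichain:
  assumes ss: "same_support P Ph" and uc: "unichain P"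
  shows "unichain Ph"
  unfolding unichain_def
proof
  fix \<pi>
  have e: "(0 < pol_trans Ph \<pi> s t) = (0 < pol_trans P \<pi> s t)" for s t
    using ss[unfolded same_support_def, rule_format, of "s \<in> \<pi>" s t] unfolding pol_trans_def by simp
  have "{(s, t). 0 < pol_trans Ph \<pi> s t} = {(s, t). 0 < pol_trans P \<pi> s t}"
    using e by blast
  then have "reach (pol_trans Ph \<pi>) = reach (pol_trans P \<pi>)" unfolding reach_def by simp
  then have "single_recurrent_class (pol_trans Ph \<pi>) = single_recurrent_class (pol_trans P \<pi>)"
    by (rule src_reach)
  then show "single_recurrent_class (pol_trans Ph \<pi>)" using unichain_src[OF uc] by simp
qed

lemma row_dist:
  fixes P Ph :: "bool \<Rightarrow> 's::finite \<Rightarrow> 's \<Rightarrow> real"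
  shows "(\<Sum>t\<in>UNIV. \<bar>P a s t - Ph a s t\<bar>) \<le> mdp_dist P Ph"
proof -
  have eq: "{(\<Sum>s'\<in>UNIV. \<bar>P a s s' - Ph a s s'\<bar>) | a s. True} = (\<lambda>(a,s). (\<Sum>s'\<in>UNIV. \<bar>P a s s' - Ph a s s'\<bar>)) ` UNIV"
    by auto
  show ?thesis unfolding mdp_dist_def eq by (rule Max_ge) auto
qed

lemma mdp_dist_nonneg: "0 \<le> mdp_dist (P :: bool \<Rightarrow> 's::finite \<Rightarrow> 's \<Rightarrow> real) Ph"
proof -
  fix s :: 's
  have "0 \<le> (\<Sum>t\<in>UNIV. \<bar>P True s t - Ph True s t\<bar>)" by (simp add: sum_nonneg)
  also have "\<dots> \<le> mdp_dist P Ph" by (rule row_dist)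
  finally show ?thesis .
qed

lemma poisson_bound:
  fixes Q :: "'s::finite \<Rightarrow> 's \<Rightarrow> real"
  assumes st: "stoch Q" and src: "single_recurrent_class Q"
  shows "\<exists>K\<ge>0. \<forall>y g b Y u. poisson Q y g b \<longrightarrow> b s0 = 0 \<longrightarrow> (\<forall>s. \<bar>y s\<bar> \<le> Y) \<longrightarrow> \<bar>b u\<bar> \<le> K * Y"
proof -
  obtain G B where rep: "\<And>rr. poisson Q rr (\<Sum>t\<in>UNIV. rr t * G t) (\<lambda>s. \<Sum>t\<in>UNIV. rr t * B t s)"
    using poisson_basis[OF st src] by blast
  define K where "K = (\<Sum>u\<in>UNIV. \<Sum>t\<in>UNIV. \<bar>B t u - B t s0\<bar>)"
  have K0: "0 \<le> K" unfolding K_def by (simp add: sum_nonneg)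
  have "poisson Q y g b \<longrightarrow> b s0 = 0 \<longrightarrow> (\<forall>s. \<bar>y s\<bar> \<le> Y) \<longrightarrow> \<bar>b u\<bar> \<le> K * Y" for y g b Y u
  proof (intro impI)
    assume p: "poisson Q y g b" and b0: "b s0 = 0" and yb: "\<forall>s. \<bar>y s\<bar> \<le> Y"
    have "b u = (\<Sum>t\<in>UNIV. y t * B t u) + (b s0 - (\<Sum>t\<in>UNIV. y t * B t s0))"
      using poisson_unique[OF st src p rep[of y], of s0] by blast
    then have bu: "b u = (\<Sum>t\<in>UNIV. y t * (B t u - B t s0))"
      unfolding b0 by (simp add: algebra_simps sum_subtractf)
    have "\<bar>b u\<bar> \<le> (\<Sum>t\<in>UNIV. \<bar>y t\<bar> * \<bar>B t u - B t s0\<bar>)"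
      unfolding bu by (rule order_trans[OF sum_abs]) (simp add: abs_mult)
    also have "\<dots> \<le> (\<Sum>t\<in>UNIV. Y * \<bar>B t u - B t s0\<bar>)"
      using yb by (intro sum_mono mult_right_mono) auto
    also have "\<dots> = Y * (\<Sum>t\<in>UNIV. \<bar>B t u - B t s0\<bar>)" by (simp add: sum_distrib_left)
    also have "\<dots> \<le> Y * K"
    proof (rule mult_left_mono)
      show "(\<Sum>t\<in>UNIV. \<bar>B t u - B t s0\<bar>) \<le> K" unfolding K_def
        by (rule member_le_sum[where f="\<lambda>u. \<Sum>t\<in>UNIV. \<bar>B t u - B t s0\<bar>"]) (auto simp: sum_nonneg)
      show "0 \<le> Y" using yb[rule_format, of s0] abs_ge_zero[of "y s0"] by linarith
    qed
    finally show "\<bar>b u\<bar> \<le> K * Y" by (simp add: mult.commute)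
  qed
  then show ?thesis using K0 by blast
qed


lemma poisson_exists0:
  fixes Q :: "'s::finite \<Rightarrow> 's \<Rightarrow> real"
  assumes st: "stoch Q" and src: "single_recurrent_class Q"
  shows "\<exists>g b. poisson Q rr g b \<and> b s0 = 0"
proof -
  obtain g b where p: "poisson Q rr g b" using poisson_exists[OF st src] by blast
  have "poisson Q rr g (\<lambda>s. b s + (- b s0))" by (rule poisson_shift[OF st p])
  then show ?thesis by (intro exI[of _ g] exI[of _ "\<lambda>s. b s + (- b s0)"]) simp
qed

lemma adv_via_poisson:
  assumes mdp: "is_mdp P" and uc: "unichain P"
    and p: "poisson (pol_trans P \<pi>) (pol_rew r l \<pi>) g b"
  shows "adv P r l \<pi> x = advb P r l b x"
proof -
  obtain c where c: "\<And>s. bias P r l \<pi> s = b s + c" using bias_const[OF mdp uc p] by blast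
  have "adv P r l \<pi> x = advb P r l (\<lambda>s. b s + c) x" unfolding adv_advb by (rule advb_cong) (rule c)
  also have "\<dots> = advb P r l b x" by (rule advb_shift[OF mdp])
  finally show ?thesis .
qed

lemma mdp_le1: "is_mdp P \<Longrightarrow> P a s t \<le> 1"
proof -
  assume mdp: "is_mdp P"
  have "P a s t \<le> (\<Sum>t\<in>UNIV. P a s t)"
    by (rule member_le_sum) (use mdp in \<open>auto simp: is_mdp_def\<close>)
  then show ?thesis using mdp unfolding is_mdp_def by simp
qed

lemma sum_abs_bound:
  fixes f :: "'s::finite \<Rightarrow> real"
  assumes "\<And>t. \<bar>v t\<bar> \<le> V"
  shows "\<bar>\<Sum>t\<in>UNIV. f t * v t\<bar> \<le> (\<Sum>t\<in>UNIV. \<bar>f t\<bar>) * V"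
proof -
  have "\<bar>\<Sum>t\<in>UNIV. f t * v t\<bar> \<le> (\<Sum>t\<in>UNIV. \<bar>f t\<bar> * \<bar>v t\<bar>)"
    by (rule order_trans[OF sum_abs]) (simp add: abs_mult)
  also have "\<dots> \<le> (\<Sum>t\<in>UNIV. \<bar>f t\<bar> * V)" using assms by (intro sum_mono mult_left_mono) auto
  finally show ?thesis by (simp add: sum_distrib_right)
qed

lemma adv_perturb:
  fixes P :: "bool \<Rightarrow> 's::finite \<Rightarrow> 's \<Rightarrow> real"
  assumes mdp: "is_mdp P" and uc: "unichain P"
  shows "\<exists>\<epsilon>0>0. \<exists>C. \<forall>Ph \<epsilon>. is_mdp Ph \<longrightarrow> unichain Ph \<longrightarrow> 0 \<le> \<epsilon> \<longrightarrow> \<epsilon> \<le> \<epsilon>0 \<longrightarrow>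
      (\<forall>a s. (\<Sum>t\<in>UNIV. \<bar>P a s t - Ph a s t\<bar>) \<le> \<epsilon>) \<longrightarrow> \<bar>adv Ph r l \<pi> x - adv P r l \<pi> x\<bar> \<le> C * \<epsilon>"
proof -
  fix s0 :: 's
  let ?Q = "pol_trans P \<pi>" and ?R = "pol_rew r l \<pi>"
  have st: "stoch ?Q" by (rule stoch_pol[OF mdp])
  have src: "single_recurrent_class ?Q" by (rule unichain_src[OF uc])
  obtain g b where pb: "poisson ?Q ?R g b" and b0: "b s0 = 0" using poisson_exists0[OF st src] by blast
  obtain K where K0: "0 \<le> K"
    and Kb: "\<And>y g b Y u. poisson ?Q y g b \<Longrightarrow> b s0 = 0 \<Longrightarrow> (\<forall>s. \<bar>y s\<bar> \<le> Y) \<Longrightarrow> \<bar>b u\<bar> \<le> K * Y"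
    using poisson_bound[OF st src, of s0] by blast
  define n where "n = real (card (UNIV :: 's set))"
  have n0: "0 \<le> n" unfolding n_def by simp
  define Bm where "Bm = (\<Sum>u\<in>UNIV. \<bar>b u\<bar>)"
  have bB: "\<bar>b u\<bar> \<le> Bm" for u unfolding Bm_def by (rule member_le_sum) auto
  have B0: "0 \<le> Bm" unfolding Bm_def by (simp add: sum_nonneg)
  define \<epsilon>0 where "\<epsilon>0 = 1 / (2 * (n * K + 1))"
  have nK0: "0 \<le> n * K" using n0 K0 by simp
  have e0pos: "0 < \<epsilon>0" unfolding \<epsilon>0_def using nK0 by simp
  have e0half: "\<epsilon>0 \<le> 1/2" unfolding \<epsilon>0_def using nK0 by (simp add: field_simps)
  have nKe0: "n * K * \<epsilon>0 \<le> 1/2" unfolding \<epsilon>0_def using nK0 by (simp add: field_simps)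
  define C where "C = 2 * Bm + 4 * (n * K) * Bm"
  have main: "\<bar>adv Ph r l \<pi> x - adv P r l \<pi> x\<bar> \<le> C * \<epsilon>"
    if mdph: "is_mdp Ph" and uch: "unichain Ph" and eps0: "0 \<le> \<epsilon>" and epsle: "\<epsilon> \<le> \<epsilon>0"
      and rows: "\<forall>a s. (\<Sum>t\<in>UNIV. \<bar>P a s t - Ph a s t\<bar>) \<le> \<epsilon>" for Ph \<epsilon>
  proof -
    let ?Qh = "pol_trans Ph \<pi>"
    have sth: "stoch ?Qh" by (rule stoch_pol[OF mdph])
    have srch: "single_recurrent_class ?Qh" by (rule unichain_src[OF uch])
    obtain gh bh where pbh: "poisson ?Qh ?R gh bh" and bh0: "bh s0 = 0"
      using poisson_exists0[OF sth srch] by blast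
    define e where "e u = bh u - b u" for u
    define E where "E = (\<Sum>u\<in>UNIV. \<bar>e u\<bar>)"
    have eE: "\<bar>e u\<bar> \<le> E" for u unfolding E_def by (rule member_le_sum) auto
    have E0: "0 \<le> E" unfolding E_def by (simp add: sum_nonneg)
    have bhB: "\<bar>bh u\<bar> \<le> Bm + E" for u using bB[of u] eE[of u] unfolding e_def by linarith
    have rowQ: "(\<Sum>t\<in>UNIV. \<bar>?Qh s t - ?Q s t\<bar>) \<le> \<epsilon>" for s
      using rows unfolding pol_trans_def by (simp add: abs_minus_commute)
    define y where "y s = (\<Sum>t\<in>UNIV. (?Qh s t - ?Q s t) * bh t)" for s
    have pe: "poisson ?Q y (gh - g) e"
      unfolding poisson_def
    proof
      fix s
      have h1: "gh + bh s = ?R s + (\<Sum>t\<in>UNIV. ?Qh s t * bh t)" using pbh unfolding poisson_def by blast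
      have h2: "g + b s = ?R s + (\<Sum>t\<in>UNIV. ?Q s t * b t)" using pb unfolding poisson_def by blast
      have "y s + (\<Sum>t\<in>UNIV. ?Q s t * e t) = (\<Sum>t\<in>UNIV. ?Qh s t * bh t) - (\<Sum>t\<in>UNIV. ?Q s t * b t)"
        unfolding y_def e_def by (simp add: algebra_simps sum_subtractf sum.distrib[symmetric])
      then show "gh - g + e s = y s + (\<Sum>t\<in>UNIV. ?Q s t * e t)" using h1 h2 unfolding e_def by simp
    qed
    have yb: "\<forall>s. \<bar>y s\<bar> \<le> \<epsilon> * (Bm + E)"
    proof
      fix s
      have "\<bar>y s\<bar> \<le> (\<Sum>t\<in>UNIV. \<bar>?Qh s t - ?Q s t\<bar>) * (Bm + E)"
        unfolding y_def by (rule sum_abs_bound) (rule bhB)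
      also have "\<dots> \<le> \<epsilon> * (Bm + E)" using rowQ[of s] B0 E0 by (intro mult_right_mono) auto
      finally show "\<bar>y s\<bar> \<le> \<epsilon> * (Bm + E)" .
    qed
    have e00: "e s0 = 0" unfolding e_def using b0 bh0 by simp
    have eb: "\<bar>e u\<bar> \<le> K * (\<epsilon> * (Bm + E))" for u by (rule Kb[OF pe e00 yb])
    have "E \<le> (\<Sum>u::'s\<in>UNIV. K * (\<epsilon> * (Bm + E)))"
    proof -
      have "(\<Sum>u\<in>UNIV. \<bar>e u\<bar>) \<le> (\<Sum>u::'s\<in>UNIV. K * (\<epsilon> * (Bm + E)))" by (intro sum_mono eb)
      then show ?thesis by (simp only: E_def[symmetric])
    qed
    also have "\<dots> = n * K * \<epsilon> * (Bm + E)" unfolding n_def by simp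
    finally have Ele: "E \<le> n * K * \<epsilon> * (Bm + E)" .
    define a where "a = n * K * \<epsilon>"
    have a0: "0 \<le> a" unfolding a_def using nK0 eps0 by simp
    have ahalf: "a \<le> 1/2"
    proof -
      have "n * K * \<epsilon> \<le> n * K * \<epsilon>0" using epsle nK0 by (simp add: mult_left_mono)
      then show ?thesis unfolding a_def using nKe0 by linarith
    qed
    have "a * E \<le> (1/2) * E" using ahalf E0 by (rule mult_right_mono)
    then have Ebound: "E \<le> 2 * a * Bm" using Ele unfolding a_def[symmetric] by (simp add: algebra_simps)
    have ah: "adv Ph r l \<pi> x = advb Ph r l bh x" by (rule adv_via_poisson[OF mdph uch pbh])
    have ap: "adv P r l \<pi> x = advb P r l b x" by (rule adv_via_poisson[OF mdp uc pb])
    let ?D1 = "\<lambda>t. Ph True x t - P True x t" and ?D0 = "\<lambda>t. Ph False x t - P False x t"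
    let ?Dp = "\<lambda>t. P True x t - P False x t"
    have diff: "advb Ph r l bh x - advb P r l b x
        = (\<Sum>t\<in>UNIV. ?D1 t * bh t) - (\<Sum>t\<in>UNIV. ?D0 t * bh t) + (\<Sum>t\<in>UNIV. ?Dp t * e t)"
      unfolding advb_def e_def by (simp add: algebra_simps sum_subtractf sum.distrib[symmetric])
    have t1: "\<bar>\<Sum>t\<in>UNIV. ?D1 t * bh t\<bar> \<le> \<epsilon> * (Bm + E)"
    proof -
      have "\<bar>\<Sum>t\<in>UNIV. ?D1 t * bh t\<bar> \<le> (\<Sum>t\<in>UNIV. \<bar>?D1 t\<bar>) * (Bm + E)"
        by (rule sum_abs_bound) (rule bhB)
      also have "\<dots> \<le> \<epsilon> * (Bm + E)"
        using rows[rule_format, of True x] B0 E0 by (intro mult_right_mono) (auto simp: abs_minus_commute)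
      finally show ?thesis .
    qed
    have t0: "\<bar>\<Sum>t\<in>UNIV. ?D0 t * bh t\<bar> \<le> \<epsilon> * (Bm + E)"
    proof -
      have "\<bar>\<Sum>t\<in>UNIV. ?D0 t * bh t\<bar> \<le> (\<Sum>t\<in>UNIV. \<bar>?D0 t\<bar>) * (Bm + E)"
        by (rule sum_abs_bound) (rule bhB)
      also have "\<dots> \<le> \<epsilon> * (Bm + E)"
        using rows[rule_format, of False x] B0 E0 by (intro mult_right_mono) (auto simp: abs_minus_commute)
      finally show ?thesis .
    qed
    have tp: "\<bar>\<Sum>t\<in>UNIV. ?Dp t * e t\<bar> \<le> E"
    proof -
      have "\<bar>\<Sum>t\<in>UNIV. ?Dp t * e t\<bar> \<le> (\<Sum>t\<in>UNIV. \<bar>?Dp t\<bar> * \<bar>e t\<bar>)"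
        by (rule order_trans[OF sum_abs]) (simp add: abs_mult)
      also have "\<dots> \<le> (\<Sum>t\<in>UNIV. \<bar>e t\<bar>)"
      proof (rule sum_mono)
        fix t
        have "0 \<le> P True x t" "P True x t \<le> 1" "0 \<le> P False x t" "P False x t \<le> 1"
          using mdp mdp_le1[OF mdp] unfolding is_mdp_def by auto
        then have "\<bar>?Dp t\<bar> \<le> 1" by simp
        then show "\<bar>?Dp t\<bar> * \<bar>e t\<bar> \<le> \<bar>e t\<bar>" using mult_right_mono[of "\<bar>?Dp t\<bar>" 1 "\<bar>e t\<bar>"] by simp
      qed
      finally show ?thesis unfolding E_def .
    qed
    have "\<bar>adv Ph r l \<pi> x - adv P r l \<pi> x\<bar> \<le> 2 * (\<epsilon> * (Bm + E)) + E"
      unfolding ah ap diff using t1 t0 tp by linarith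
    also have "\<dots> = 2 * \<epsilon> * Bm + 2 * \<epsilon> * E + E" by (simp add: algebra_simps)
    also have "\<dots> \<le> 2 * \<epsilon> * Bm + 2 * E"
    proof -
      have "\<epsilon> * E \<le> (1/2) * E" using epsle e0half E0 by (intro mult_right_mono) auto
      then show ?thesis by simp
    qed
    also have "\<dots> \<le> 2 * \<epsilon> * Bm + 4 * a * Bm" using Ebound by (simp add: algebra_simps)
    also have "\<dots> = C * \<epsilon>" unfolding C_def a_def by (simp add: algebra_simps)
    finally show ?thesis .
  qed
  show ?thesis using e0pos main by blast
qed


definition nbh :: "(bool \<Rightarrow> 's::finite \<Rightarrow> 's \<Rightarrow> real) \<Rightarrow> (bool \<Rightarrow> 's \<Rightarrow> 's \<Rightarrow> real) filter" where
  "nbh P = inf (filtercomap (mdp_dist P) (nhds 0)) (principal {Ph. is_mdp Ph \<and> same_support P Ph})"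

lemma nbh_eventually_dist:
  assumes d: "0 < d"
  shows "eventually (\<lambda>Ph. mdp_dist P Ph \<le> d \<and> is_mdp Ph \<and> same_support P Ph) (nbh P)"
  unfolding nbh_def eventually_inf_principal eventually_filtercomap
proof (intro exI conjI)
  show "eventually (\<lambda>x. dist x (0::real) \<le> d) (nhds 0)"
    unfolding eventually_nhds_metric_le using d by blast
  show "\<forall>x. dist (mdp_dist P x) 0 \<le> d \<longrightarrow>
      x \<in> {Ph. is_mdp Ph \<and> same_support P Ph} \<longrightarrow> mdp_dist P x \<le> d \<and> is_mdp x \<and> same_support P x"
    by (auto simp: dist_real_def)
qed

lemma nbh_extract:
  assumes ev: "eventually G (nbh P)"
  shows "\<exists>\<delta>>0. \<forall>Ph. is_mdp Ph \<and> same_support P Ph \<and> mdp_dist P Ph \<le> \<delta> \<longrightarrow> G Ph"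
proof -
  obtain Q where Q: "eventually Q (nhds 0)"
    and QG: "\<forall>Ph. Q (mdp_dist P Ph) \<longrightarrow> Ph \<in> {Ph. is_mdp Ph \<and> same_support P Ph} \<longrightarrow> G Ph"
    using ev unfolding nbh_def eventually_inf_principal eventually_filtercomap by blast
  obtain d where d: "0 < d" "\<forall>x. dist x (0::real) \<le> d \<longrightarrow> Q x"
    using Q unfolding eventually_nhds_metric_le by blast
  have "G Ph" if "is_mdp Ph \<and> same_support P Ph \<and> mdp_dist P Ph \<le> d" for Ph
  proof -
    have "dist (mdp_dist P Ph) 0 \<le> d" using that mdp_dist_nonneg[of P Ph] by (simp add: dist_real_def)
    then show ?thesis using d(2) QG that by blast
  qed
  then show ?thesis using d(1) by blast
qed

lemma adv_tendsto:
  fixes P :: "bool \<Rightarrow> 's::finite \<Rightarrow> 's \<Rightarrow> real"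
  assumes mdp: "is_mdp P" and uc: "unichain P"
  shows "((\<lambda>Ph. adv Ph r l \<pi> x) \<longlongrightarrow> adv P r l \<pi> x) (nbh P)"
proof -
  obtain \<epsilon>0 C where e0: "0 < \<epsilon>0"
    and main: "\<And>Ph \<epsilon>. is_mdp Ph \<Longrightarrow> unichain Ph \<Longrightarrow> 0 \<le> \<epsilon> \<Longrightarrow> \<epsilon> \<le> \<epsilon>0 \<Longrightarrow>
      (\<forall>a s. (\<Sum>t\<in>UNIV. \<bar>P a s t - Ph a s t\<bar>) \<le> \<epsilon>) \<Longrightarrow> \<bar>adv Ph r l \<pi> x - adv P r l \<pi> x\<bar> \<le> C * \<epsilon>"
    using adv_perturb[OF mdp uc, of r l \<pi> x] by blast
  show ?thesis
    unfolding tendsto_iff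
  proof (intro allI impI)
    fix e :: real assume e: "0 < e"
    define d where "d = min \<epsilon>0 (e / (\<bar>C\<bar> + 1))"
    have d0: "0 < d" unfolding d_def using e0 e by simp
    show "eventually (\<lambda>Ph. dist (adv Ph r l \<pi> x) (adv P r l \<pi> x) < e) (nbh P)"
      using nbh_eventually_dist[OF d0, of P]
    proof (rule eventually_mono)
      fix Ph assume h: "mdp_dist P Ph \<le> d \<and> is_mdp Ph \<and> same_support P Ph"
      let ?\<epsilon> = "mdp_dist P Ph"
      have uch: "unichain Ph" using same_support_unichain h uc by blast
      have le0: "?\<epsilon> \<le> \<epsilon>0" using h unfolding d_def by simp
      have rows: "\<forall>a s. (\<Sum>t\<in>UNIV. \<bar>P a s t - Ph a s t\<bar>) \<le> ?\<epsilon>" using row_dist by blast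
      have b: "\<bar>adv Ph r l \<pi> x - adv P r l \<pi> x\<bar> \<le> C * ?\<epsilon>"
        using main[OF _ uch mdp_dist_nonneg le0 rows] h by blast
      have "C * ?\<epsilon> \<le> \<bar>C\<bar> * ?\<epsilon>" using mdp_dist_nonneg[of P Ph] by (simp add: mult_right_mono)
      also have "\<dots> \<le> \<bar>C\<bar> * (e / (\<bar>C\<bar> + 1))"
        using h unfolding d_def by (intro mult_left_mono) auto
      also have "\<dots> < e"
      proof -
        have "\<bar>C\<bar> * (e / (\<bar>C\<bar> + 1)) = e * (\<bar>C\<bar> / (\<bar>C\<bar> + 1))" by simp
        also have "\<dots> < e * 1" using e by (intro mult_strict_left_mono) auto
        finally show ?thesis by simp
      qed
      finally show "dist (adv Ph r l \<pi> x) (adv P r l \<pi> x) < e" using b by (simp add: dist_real_def)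
    qed
  qed
qed


lemma aff_pos_between:
  fixes a \<sigma> x y1 y2 :: real
  assumes "0 < a + y1 * \<sigma>" "0 < a + y2 * \<sigma>" "y1 \<le> x" "x \<le> y2"
  shows "0 < a + x * \<sigma>"
proof (cases "0 \<le> \<sigma>")
  case True
  then have "y1 * \<sigma> \<le> x * \<sigma>" using assms(3) by (rule mult_right_mono[rotated])
  then show ?thesis using assms(1) by linarith
next
  case False
  then have "y2 * \<sigma> \<le> x * \<sigma>" using assms(4) by (intro mult_right_mono_neg) auto
  then show ?thesis using assms(2) by linarith
qed

lemma aff_neg_between:
  fixes a \<sigma> x y1 y2 :: real
  assumes "a + y1 * \<sigma> < 0" "a + y2 * \<sigma> < 0" "y1 \<le> x" "x \<le> y2"
  shows "a + x * \<sigma> < 0"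
  using aff_pos_between[of "-a" y1 "-\<sigma>" y2 x] assms by simp

lemma aff_zero:
  fixes a \<sigma> x y0 :: real
  assumes z: "a + y0 * \<sigma> = 0" and s: "\<sigma> < 0"
  shows "(x < y0 \<longrightarrow> 0 < a + x * \<sigma>) \<and> (y0 < x \<longrightarrow> a + x * \<sigma> < 0) \<and> (x = y0 \<longrightarrow> a + x * \<sigma> = 0)"
proof -
  have e: "a + x * \<sigma> = (x - y0) * \<sigma>" using z by (simp add: algebra_simps)
  show ?thesis unfolding e using s by (auto simp: mult_pos_neg mult_neg_neg)
qed

lemma ph_indexable:
  fixes Ph :: "bool \<Rightarrow> 's::finite \<Rightarrow> 's \<Rightarrow> real" and lam :: "'s \<Rightarrow> real" and r :: "bool \<Rightarrow> 's \<Rightarrow> real"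
    and Vs :: "'s \<Rightarrow> 's set" and sg :: "'s set \<Rightarrow> 's \<Rightarrow> real" and lh :: "'s \<Rightarrow> real"
  assumes Vs_def: "Vs = (\<lambda>u. {s. lam u \<le> lam s})"
    and sg_def: "sg = (\<lambda>V t. adv Ph r 1 V t - adv Ph r 0 V t)"
    and lh_def: "lh = (\<lambda>u. - adv Ph r 0 (Vs u) u / sg (Vs u) u)"
    and mdp: "is_mdp Ph" and uc: "unichain Ph"
    and inj: "\<And>s t. s \<noteq> t \<Longrightarrow> lam s \<noteq> lam t"
    and G1a: "\<And>u. sg (Vs u) u < 0" and G1b: "\<And>u. sg (flip (Vs u) u) u < 0"
    and G2: "\<And>u t. lam u < lam t \<Longrightarrow> lh u < lh t"
    and G3a: "\<And>u t. lam u < lam t \<Longrightarrow> 0 < adv Ph r (lh u) (Vs u) t"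
    and G3b: "\<And>u t. lam t < lam u \<Longrightarrow> adv Ph r (lh u) (Vs u) t < 0"
  shows "\<forall>t. is_whittle_index Ph r t (lh t)"
proof -
  have aff: "adv Ph r y V t = adv Ph r 0 V t + y * sg V t" for y V t
  proof -
    have "adv Ph r y V t = adv Ph r 0 V t + y * (adv Ph r 1 V t - adv Ph r 0 V t)"
      by (rule adv_affine[OF mdp uc])
    then show ?thesis unfolding sg_def by simp
  qed
  have z: "adv Ph r (lh u) (Vs u) u = 0" for u
  proof -
    have "sg (Vs u) u \<noteq> 0" using G1a[of u] by simp
    moreover have "adv Ph r (lh u) (Vs u) u = adv Ph r 0 (Vs u) u + lh u * sg (Vs u) u" by (rule aff)
    ultimately show ?thesis unfolding lh_def by (simp add: field_simps)
  qed
  have Wdef: "flip (Vs u) u = {s. lam u < lam s}" for u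
  proof (rule set_eqI)
    fix s show "s \<in> flip (Vs u) u \<longleftrightarrow> s \<in> {s. lam u < lam s}"
    proof (cases "s = u")
      case True then show ?thesis unfolding mem_flip Vs_def by simp
    next
      case False
      then have "lam u \<noteq> lam s" using inj by metis
      then show ?thesis using False unfolding mem_flip Vs_def by auto
    qed
  qed
  have zW: "adv Ph r (lh u) (flip (Vs u) u) t = adv Ph r (lh u) (Vs u) t" for u t
    by (rule adv_switch[OF mdp uc z])
  have mono: "lh s \<le> lh t \<longleftrightarrow> lam s \<le> lam t" for s t
  proof (cases "s = t")
    case False
    then have "lam s \<noteq> lam t" by (rule inj)
    then show ?thesis using G2[of s t] G2[of t s] by (cases "lam s < lam t") auto
  qed simp
  have monol: "lh s < lh t \<longleftrightarrow> lam s < lam t" for s t using mono[of t s] by auto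
  define Vh where "Vh x = {s. x < lh s}" for x
  have key: "(x < lh t \<longrightarrow> 0 < adv Ph r x (Vh x) t) \<and> (lh t < x \<longrightarrow> adv Ph r x (Vh x) t < 0)
          \<and> (lh t = x \<longrightarrow> adv Ph r x (Vh x) t = 0)" for x t
  proof (cases "{s. lh s \<le> x} = {}")
    case True
    have "lh ` UNIV \<noteq> {}" by simp
    have "Min (lh ` UNIV) \<in> lh ` UNIV" by (rule Min_in) auto
    then obtain w where w: "lh w = Min (lh ` UNIV)" by (metis imageE)
    have wmin: "lh w \<le> lh s" for s unfolding w by simp
    have allx: "x < lh s" for s using True by (auto simp: not_le)
    have VU: "Vh x = UNIV" unfolding Vh_def using allx by auto
    have VwU: "Vs w = UNIV" unfolding Vs_def using wmin mono by auto
    have fx: "adv Ph r x UNIV t = adv Ph r (lh w) UNIV t + (lh w - x)"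
      using adv_UNIV[OF mdp uc, of r x t] adv_UNIV[OF mdp uc, of r "lh w" t] by simp
    have "0 < adv Ph r x UNIV t"
    proof (cases "t = w")
      case True
      then show ?thesis using fx z[of w] VwU allx[of w] by simp
    next
      case False
      then have "lam w < lam t" using inj[of w t] mono[of w t] wmin[of t] by auto
      then have "0 < adv Ph r (lh w) UNIV t" using G3a[of w t] VwU by simp
      then show ?thesis using fx allx[of w] by simp
    qed
    then show ?thesis using VU allx[of t] by simp
  next
    case False
    define L where "L = {s. lh s \<le> x}"
    have "Max (lh ` L) \<in> lh ` L" by (rule Max_in) (use False L_def in auto)
    then obtain u where uL: "u \<in> L" and u: "lh u = Max (lh ` L)" by (metis imageE)
    have umax: "s \<in> L \<Longrightarrow> lh s \<le> lh u" for s unfolding u by simp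
    have ux: "lh u \<le> x" using uL unfolding L_def by simp
    have VhW: "x < lh s \<longleftrightarrow> lam u < lam s" for s
    proof
      assume "x < lh s"
      then have "\<not> lh s \<le> lh u" using ux by simp
      then show "lam u < lam s" using mono[of s u] by simp
    next
      assume "lam u < lam s"
      then have "lh u < lh s" using monol by simp
      then show "x < lh s" using umax[of s] unfolding L_def by force
    qed
    have Vh_eq: "Vh x = flip (Vs u) u" unfolding Wdef Vh_def using VhW by auto
    have fu: "adv Ph r (lh u) (Vh x) t = adv Ph r (lh u) (Vs u) t" using zW unfolding Vh_eq by simp
    show ?thesis
    proof (cases "{s. x < lh s} = {}")
      case True
      have VE: "Vh x = {}" unfolding Vh_def using True by simp
      have allx: "lh s \<le> x" for s using True by (auto simp: not_less)
      have fx: "adv Ph r x {} t = adv Ph r (lh u) {} t - (x - lh u)"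
        using adv_empty[OF mdp uc, of r x t] adv_empty[OF mdp uc, of r "lh u" t] by simp
      show ?thesis
      proof (cases "t = u")
        case True
        have "adv Ph r (lh u) {} u = 0" using fu z[of u] VE True by simp
        then show ?thesis using fx True VE ux by auto
      next
        case False
        have "lam t < lam u" using inj[OF False] umax[of t] allx[of t] mono[of t u] unfolding L_def by force
        then have "adv Ph r (lh u) {} t < 0" using G3b[of t u] fu VE by simp
        moreover have "lh t < x" using \<open>lam t < lam u\<close> monol[of t u] ux by simp
        ultimately show ?thesis using fx VE ux by simp
      qed
    next
      case False
      define U where "U = {s. x < lh s}"
      have "Min (lh ` U) \<in> lh ` U" by (rule Min_in) (use False U_def in auto)
      then obtain w where wU: "w \<in> U" and w: "lh w = Min (lh ` U)" by (metis imageE)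
      have wmin: "s \<in> U \<Longrightarrow> lh w \<le> lh s" for s unfolding w by simp
      have xw: "x < lh w" using wU unfolding U_def by simp
      have uw: "lam u < lam w" using VhW xw by simp
      have VhV: "x < lh s \<longleftrightarrow> lam w \<le> lam s" for s
        using wmin[of s] mono[of w s] xw unfolding U_def by force
      have Vh_eq2: "Vh x = Vs w" unfolding Vh_def Vs_def using VhV by auto
      have fw: "adv Ph r (lh w) (Vh x) t = adv Ph r (lh w) (Vs w) t" unfolding Vh_eq2 ..
      let ?a = "adv Ph r 0 (Vh x) t" and ?s = "sg (Vh x) t"
      have f: "adv Ph r y (Vh x) t = ?a + y * ?s" for y by (rule aff)
      show ?thesis
      proof (cases "x < lh t")
        case True
        then have ut: "lam u < lam t" using VhW by simp
        have "0 < ?a + x * ?s"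
        proof (cases "t = w")
          case True
          have "?a + lh w * ?s = 0" using f[of "lh w"] fw z[of w] True by simp
          moreover have "?s < 0" using G1a[of w] Vh_eq2 True by simp
          ultimately show ?thesis using aff_zero[of ?a "lh w" ?s x] xw by simp
        next
          case False
          have "lam w < lam t" using VhV[of t] True inj[OF False[symmetric]] by simp
          then have p2: "0 < ?a + lh w * ?s" using G3a[of w t] f[of "lh w"] fw by simp
          have p1: "0 < ?a + lh u * ?s" using G3a[of u t] ut f[of "lh u"] fu by simp
          show ?thesis by (rule aff_pos_between[OF p1 p2 ux]) (use xw in simp)
        qed
        then show ?thesis using True f[of x] by simp
      next
        case False
        then have tu: "lam t \<le> lam u" using VhW by simp
        show ?thesis
        proof (cases "t = u")
          case True
          have "?a + lh u * ?s = 0" using f[of "lh u"] fu z[of u] True by simp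
          moreover have "?s < 0" using G1b[of u] Vh_eq True by simp
          ultimately show ?thesis using aff_zero[of ?a "lh u" ?s x] ux f[of x] True False by auto
        next
          case tne: False
          have tu': "lam t < lam u" using tu inj[OF tne] by simp
          have n1: "?a + lh u * ?s < 0" using G3b[of t u] tu' f[of "lh u"] fu by simp
          have n2: "?a + lh w * ?s < 0" using G3b[of t w] tu' uw f[of "lh w"] fw by simp
          have "?a + x * ?s < 0" by (rule aff_neg_between[OF n1 n2 ux]) (use xw in simp)
          moreover have "lh t < x" using tu' monol[of t u] ux by simp
          ultimately show ?thesis using f[of x] by simp
        qed
      qed
    qed
  qed
  show ?thesis
  proof
    fix t
    have sc: "SC Ph r x (Vh x)" for x
      unfolding SC_def
    proof (intro allI conjI impI)
      fix s assume "s \<in> Vh x"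
      then show "0 \<le> adv Ph r x (Vh x) s" using key[of x s] unfolding Vh_def by simp
    next
      fix s assume "s \<notin> Vh x"
      then have "lh s < x \<or> lh s = x" unfolding Vh_def by auto
      then show "adv Ph r x (Vh x) s \<le> 0" using key[of x s] by auto
    qed
    have oa: "opt_adv Ph r x t = adv Ph r x (Vh x) t" for x by (rule opt_adv_SC[OF mdp uc sc])
    show "is_whittle_index Ph r t (lh t)"
      unfolding is_whittle_index_def using key oa by simp
  qed
qed


lemma whittle_is:
  assumes ix: "indexable P r"
  shows "is_whittle_index P r s (whittle P r s)"
proof -
  obtain ls where ls: "is_whittle_index P r s ls" using ix unfolding indexable_def by blast
  have "whittle P r s = ls" unfolding whittle_def
  proof (rule the_equality[where P="is_whittle_index P r s", OF ls])
    fix ls' assume ls': "is_whittle_index P r s ls'"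
    show "ls' = ls"
    proof (rule ccontr)
      assume ne: "ls' \<noteq> ls"
      define m where "m = (ls + ls') / 2"
      show False
      proof (cases "ls < ls'")
        case True
        then have "ls < m" "m < ls'" unfolding m_def by auto
        then show False using ls ls' unfolding is_whittle_index_def by force
      next
        case False
        then have "ls' < m" "m < ls" using ne unfolding m_def by auto
        then show False using ls ls' unfolding is_whittle_index_def by force
      qed
    qed
  qed
  then show ?thesis using ls by simp
qed

lemma aff_lim_right:
  fixes a \<sigma> c \<eta> :: real
  assumes e: "0 < \<eta>" and h: "\<And>x. c < x \<Longrightarrow> x < c + \<eta> \<Longrightarrow> 0 < a + x * \<sigma>"
  shows "0 \<le> a + c * \<sigma>"
proof (rule tendsto_lowerbound)
  show "((\<lambda>x. a + x * \<sigma>) \<longlongrightarrow> a + c * \<sigma>) (at_right c)" by (intro tendsto_intros)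
  show "eventually (\<lambda>x. 0 \<le> a + x * \<sigma>) (at_right c)"
    unfolding eventually_at_right_field using e h by (intro exI[of _ "c + \<eta>"]) (auto intro: less_imp_le)
qed simp

lemma aff_lim_left:
  fixes a \<sigma> c \<eta> :: real
  assumes e: "0 < \<eta>" and h: "\<And>x. c - \<eta> < x \<Longrightarrow> x < c \<Longrightarrow> 0 < a + x * \<sigma>"
  shows "0 \<le> a + c * \<sigma>"
proof (rule tendsto_lowerbound)
  show "((\<lambda>x. a + x * \<sigma>) \<longlongrightarrow> a + c * \<sigma>) (at_left c)" by (intro tendsto_intros)
  show "eventually (\<lambda>x. 0 \<le> a + x * \<sigma>) (at_left c)"
    unfolding eventually_at_left_field using e h by (intro exI[of _ "c - \<eta>"]) (auto intro: less_imp_le)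
qed simp

lemma gap:
  fixes lam :: "'s::finite \<Rightarrow> real"
  shows "\<exists>\<eta>>0. \<forall>s. lam s \<noteq> c \<longrightarrow> \<eta> \<le> \<bar>lam s - c\<bar>"
proof -
  define S where "S = insert 1 ((\<lambda>s. \<bar>lam s - c\<bar>) ` {s. lam s \<noteq> c})"
  have fin: "finite S" unfolding S_def by simp
  have pos: "\<forall>x\<in>S. 0 < x" unfolding S_def by auto
  have "Min S \<in> S" by (rule Min_in[OF fin]) (simp add: S_def)
  then have "0 < Min S" using pos by blast
  moreover have "\<forall>s. lam s \<noteq> c \<longrightarrow> Min S \<le> \<bar>lam s - c\<bar>"
    using fin unfolding S_def by auto
  ultimately show ?thesis by blast
qed


lemma M_facts:
  fixes P :: "bool \<Rightarrow> 's::finite \<Rightarrow> 's \<Rightarrow> real" and lam :: "'s \<Rightarrow> real"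
  assumes mdp: "is_mdp P" and uc: "unichain P" and ix: "indexable P r"
    and lam_def: "lam = whittle P r"
    and dist: "\<And>s t. s \<noteq> t \<Longrightarrow> lam s \<noteq> lam t"
  shows "\<And>u t. lam u < lam t \<Longrightarrow> 0 < adv P r (lam u) {s. lam u \<le> lam s} t"
    and "\<And>u t. lam t < lam u \<Longrightarrow> adv P r (lam u) {s. lam u \<le> lam s} t < 0"
    and "\<And>u. adv P r (lam u) {s. lam u \<le> lam s} u = 0"
    and "\<And>u. adv P r 1 {s. lam u \<le> lam s} u - adv P r 0 {s. lam u \<le> lam s} u < 0"
    and "\<And>u. adv P r 1 (flip {s. lam u \<le> lam s} u) u - adv P r 0 (flip {s. lam u \<le> lam s} u) u < 0"
proof -
  have wi: "is_whittle_index P r s (lam s)" for s unfolding lam_def by (rule whittle_is[OF ix])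
  have opos: "x < lam s \<Longrightarrow> 0 < opt_adv P r x s" for x s using wi[of s] unfolding is_whittle_index_def by blast
  have oneg: "lam s < x \<Longrightarrow> opt_adv P r x s < 0" for x s using wi[of s] unfolding is_whittle_index_def by blast
  have aff: "adv P r y V t = adv P r 0 V t + y * (adv P r 1 V t - adv P r 0 V t)" for y V t
    by (rule adv_affine[OF mdp uc])
  define Th where "Th c = {s. c < lam s}" for c
  have open_sc: "SC P r x (Th x)" if nx: "\<forall>s. lam s \<noteq> x" for x
  proof -
    obtain \<pi> where sc: "SC P r x \<pi>" using exists_SC[OF mdp uc] by blast
    have oa: "opt_adv P r x s = adv P r x \<pi> s" for s by (rule opt_adv_SC[OF mdp uc sc])
    have "\<pi> = Th x"
    proof (rule set_eqI)
      fix s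
      show "s \<in> \<pi> \<longleftrightarrow> s \<in> Th x"
      proof
        assume "s \<in> \<pi>"
        then have "0 \<le> opt_adv P r x s" using sc oa unfolding SC_def by simp
        then have "\<not> lam s < x" using oneg[of s x] by force
        moreover have "lam s \<noteq> x" using nx by blast
        ultimately show "s \<in> Th x" unfolding Th_def by simp
      next
        assume "s \<in> Th x"
        then have "0 < opt_adv P r x s" using opos unfolding Th_def by simp
        then show "s \<in> \<pi>" using sc oa unfolding SC_def by force
      qed
    qed
    then show ?thesis using sc by simp
  qed
  have open_oa: "opt_adv P r x s = adv P r x (Th x) s" if "\<forall>s. lam s \<noteq> x" for x s
    by (rule opt_adv_SC[OF mdp uc open_sc[OF that]])
  have windows: "\<exists>\<eta>>0. (\<forall>x. c < x \<longrightarrow> x < c + \<eta> \<longrightarrow> (\<forall>s. lam s \<noteq> x) \<and> Th x = Th c)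
      \<and> (\<forall>x. c - \<eta> < x \<longrightarrow> x < c \<longrightarrow> (\<forall>s. lam s \<noteq> x) \<and> Th x = {s. c \<le> lam s})
      \<and> (\<forall>s. c < lam s \<longrightarrow> c + \<eta> \<le> lam s) \<and> (\<forall>s. lam s < c \<longrightarrow> lam s \<le> c - \<eta>)" for c
  proof -
    obtain \<eta> where e: "0 < \<eta>" and g: "\<forall>s. lam s \<noteq> c \<longrightarrow> \<eta> \<le> \<bar>lam s - c\<bar>" using gap by blast
    have up: "c < lam s \<Longrightarrow> c + \<eta> \<le> lam s" for s using g[rule_format, of s] by auto
    have dn: "lam s < c \<Longrightarrow> lam s \<le> c - \<eta>" for s using g[rule_format, of s] by auto
    have r: "(\<forall>s. lam s \<noteq> x) \<and> Th x = Th c" if "c < x" "x < c + \<eta>" for x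
    proof
      show "\<forall>s. lam s \<noteq> x"
      proof
        fix s show "lam s \<noteq> x" using up[of s] dn[of s] that by (cases "lam s < c"; cases "c < lam s") auto
      qed
      show "Th x = Th c" unfolding Th_def
      proof (rule set_eqI)
        fix s show "s \<in> {s. x < lam s} \<longleftrightarrow> s \<in> {s. c < lam s}"
          using up[of s] that by (cases "c < lam s") auto
      qed
    qed
    have l: "(\<forall>s. lam s \<noteq> x) \<and> Th x = {s. c \<le> lam s}" if "c - \<eta> < x" "x < c" for x
    proof
      show "\<forall>s. lam s \<noteq> x"
      proof
        fix s show "lam s \<noteq> x" using up[of s] dn[of s] that by (cases "lam s < c"; cases "c < lam s") auto
      qed
      show "Th x = {s. c \<le> lam s}" unfolding Th_def
      proof (rule set_eqI)
        fix s show "s \<in> {s. x < lam s} \<longleftrightarrow> s \<in> {s. c \<le> lam s}"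
          using dn[of s] that by (cases "lam s < c") auto
      qed
    qed
    show ?thesis using e r l up dn by blast
  qed
  have SCr: "SC P r c (Th c)" for c
  proof -
    obtain \<eta> where e: "0 < \<eta>"
      and r: "\<forall>x. c < x \<longrightarrow> x < c + \<eta> \<longrightarrow> (\<forall>s. lam s \<noteq> x) \<and> Th x = Th c"
      and up: "\<forall>s. c < lam s \<longrightarrow> c + \<eta> \<le> lam s"
      using windows[of c] by blast
    show ?thesis unfolding SC_def
    proof (intro allI conjI impI)
      fix s assume s: "s \<in> Th c"
      have "0 < adv P r 0 (Th c) s + x * (adv P r 1 (Th c) s - adv P r 0 (Th c) s)"
        if "c < x" "x < c + \<eta>" for x
      proof -
        have "0 < opt_adv P r x s" using opos s up that unfolding Th_def by force
        then show ?thesis using r that open_oa[of x s] aff[of x "Th c" s] by (auto simp: algebra_simps)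
      qed
      then have "0 \<le> adv P r 0 (Th c) s + c * (adv P r 1 (Th c) s - adv P r 0 (Th c) s)"
        by (rule aff_lim_right[OF e])
      then show "0 \<le> adv P r c (Th c) s" using aff[of c "Th c" s] by simp
    next
      fix s assume s: "s \<notin> Th c"
      have "0 < - adv P r 0 (Th c) s + x * (- (adv P r 1 (Th c) s - adv P r 0 (Th c) s))"
        if "c < x" "x < c + \<eta>" for x
      proof -
        have "opt_adv P r x s < 0" using oneg s that unfolding Th_def by force
        then show ?thesis using r that open_oa[of x s] aff[of x "Th c" s] by (auto simp: algebra_simps)
      qed
      then have "0 \<le> - adv P r 0 (Th c) s + c * (- (adv P r 1 (Th c) s - adv P r 0 (Th c) s))"
        by (rule aff_lim_right[OF e])
      then show "adv P r c (Th c) s \<le> 0" using aff[of c "Th c" s] by (simp add: algebra_simps)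
    qed
  qed
  have SCl: "SC P r c {s. c \<le> lam s}" for c
  proof -
    obtain \<eta> where e: "0 < \<eta>"
      and l: "\<forall>x. c - \<eta> < x \<longrightarrow> x < c \<longrightarrow> (\<forall>s. lam s \<noteq> x) \<and> Th x = {s. c \<le> lam s}"
      and dn: "\<forall>s. lam s < c \<longrightarrow> lam s \<le> c - \<eta>"
      using windows[of c] by blast
    let ?V = "{s. c \<le> lam s}"
    show ?thesis unfolding SC_def
    proof (intro allI conjI impI)
      fix s assume s: "s \<in> ?V"
      have "0 < adv P r 0 ?V s + x * (adv P r 1 ?V s - adv P r 0 ?V s)"
        if "c - \<eta> < x" "x < c" for x
      proof -
        have "0 < opt_adv P r x s" using opos s that by force
        then show ?thesis using l that open_oa[of x s] aff[of x ?V s] by (auto simp: algebra_simps)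
      qed
      then have "0 \<le> adv P r 0 ?V s + c * (adv P r 1 ?V s - adv P r 0 ?V s)"
        by (rule aff_lim_left[OF e])
      then show "0 \<le> adv P r c ?V s" using aff[of c ?V s] by simp
    next
      fix s assume s: "s \<notin> ?V"
      have "0 < - adv P r 0 ?V s + x * (- (adv P r 1 ?V s - adv P r 0 ?V s))"
        if "c - \<eta> < x" "x < c" for x
      proof -
        have "lam s < c" using s by simp
        then have "lam s \<le> c - \<eta>" using dn by blast
        then have "lam s < x" using that by simp
        then have "opt_adv P r x s < 0" by (rule oneg)
        then show ?thesis using l that open_oa[of x s] aff[of x ?V s] by (auto simp: algebra_simps)
      qed
      then have "0 \<le> - adv P r 0 ?V s + c * (- (adv P r 1 ?V s - adv P r 0 ?V s))"
        by (rule aff_lim_left[OF e])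
      then show "adv P r c ?V s \<le> 0" using aff[of c ?V s] by (simp add: algebra_simps)
    qed
  qed
  have Wdef: "flip {s. lam u \<le> lam s} u = Th (lam u)" for u
  proof (rule set_eqI)
    fix s show "s \<in> flip {s. lam u \<le> lam s} u \<longleftrightarrow> s \<in> Th (lam u)"
    proof (cases "s = u")
      case True then show ?thesis unfolding mem_flip Th_def by simp
    next
      case False
      then have "lam u \<noteq> lam s" using dist by metis
      then show ?thesis using False unfolding mem_flip Th_def by auto
    qed
  qed
  have oaV: "opt_adv P r (lam u) t = adv P r (lam u) {s. lam u \<le> lam s} t" for u t
    by (rule opt_adv_SC[OF mdp uc SCl])
  show M1a: "0 < adv P r (lam u) {s. lam u \<le> lam s} t" if "lam u < lam t" for u t
    using opos[OF that] oaV by simp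
  show "adv P r (lam u) {s. lam u \<le> lam s} t < 0" if "lam t < lam u" for u t
    using oneg[OF that] oaV by simp
  have M3: "adv P r (lam u) {s. lam u \<le> lam s} u = 0" for u
  proof -
    have "0 \<le> adv P r (lam u) {s. lam u \<le> lam s} u" using SCl[of "lam u"] unfolding SC_def by simp
    moreover have "opt_adv P r (lam u) u = adv P r (lam u) (Th (lam u)) u"
      by (rule opt_adv_SC[OF mdp uc SCr])
    moreover have "adv P r (lam u) (Th (lam u)) u \<le> 0" using SCr[of "lam u"] unfolding SC_def Th_def by simp
    ultimately show ?thesis using oaV[of u u] by simp
  qed
  then show "\<And>u. adv P r (lam u) {s. lam u \<le> lam s} u = 0" by blast
  show "adv P r 1 {s. lam u \<le> lam s} u - adv P r 0 {s. lam u \<le> lam s} u < 0" for u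
  proof -
    let ?V = "{s. lam u \<le> lam s}"
    let ?a = "adv P r 0 ?V u" and ?\<sigma> = "adv P r 1 ?V u - adv P r 0 ?V u"
    obtain \<eta> where e: "0 < \<eta>"
      and l: "\<forall>x. lam u - \<eta> < x \<longrightarrow> x < lam u \<longrightarrow> (\<forall>s. lam s \<noteq> x) \<and> Th x = ?V"
      using windows[of "lam u"] by blast
    define x where "x = lam u - \<eta> / 2"
    have x1: "lam u - \<eta> < x" "x < lam u" unfolding x_def using e by auto
    have "0 < opt_adv P r x u" using opos x1 by simp
    then have p: "0 < ?a + x * ?\<sigma>" using l x1 open_oa[of x u] aff[of x ?V u] by auto
    have z: "?a + lam u * ?\<sigma> = 0" using M3[of u] aff[of "lam u" ?V u] by simp
    have "0 < (x - lam u) * ?\<sigma>" using p z by (simp add: algebra_simps)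
    then show ?thesis using x1 by (simp add: zero_less_mult_iff)
  qed
  show "adv P r 1 (flip {s. lam u \<le> lam s} u) u - adv P r 0 (flip {s. lam u \<le> lam s} u) u < 0" for u
  proof -
    let ?V = "flip {s. lam u \<le> lam s} u"
    let ?a = "adv P r 0 ?V u" and ?\<sigma> = "adv P r 1 ?V u - adv P r 0 ?V u"
    obtain \<eta> where e: "0 < \<eta>"
      and rr: "\<forall>x. lam u < x \<longrightarrow> x < lam u + \<eta> \<longrightarrow> (\<forall>s. lam s \<noteq> x) \<and> Th x = Th (lam u)"
      using windows[of "lam u"] by blast
    define x where "x = lam u + \<eta> / 2"
    have x1: "lam u < x" "x < lam u + \<eta>" unfolding x_def using e by auto
    have "opt_adv P r x u < 0" using oneg x1 by simp
    then have p: "?a + x * ?\<sigma> < 0" using rr x1 open_oa[of x u] aff[of x ?V u] Wdef[of u] by auto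
    have "adv P r (lam u) ?V u = adv P r (lam u) {s. lam u \<le> lam s} u"
      by (rule adv_switch[OF mdp uc M3])
    then have z: "?a + lam u * ?\<sigma> = 0" using M3[of u] aff[of "lam u" ?V u] by simp
    have "(x - lam u) * ?\<sigma> < 0" using p z by (simp add: algebra_simps)
    then show ?thesis using x1 by (simp add: mult_less_0_iff)
  qed
qed


theorem mainTheorem1:
  fixes P :: "bool \<Rightarrow> 's::finite \<Rightarrow> 's \<Rightarrow> real" and r :: "bool \<Rightarrow> 's \<Rightarrow> real"
  assumes "is_mdp P" and "unichain P" and "indexable P r"
    and "\<forall>s t. s \<noteq> t \<longrightarrow> whittle P r s \<noteq> whittle P r t"
  shows "\<exists>\<delta>>0. \<forall>Ph :: bool \<Rightarrow> 's \<Rightarrow> 's \<Rightarrow> real.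
           is_mdp Ph \<and> same_support P Ph \<and> mdp_dist P Ph \<le> \<delta> \<longrightarrow> indexable Ph r"
proof -
  note mdp = assms(1) and uc = assms(2) and ix = assms(3)
  define lam where "lam = whittle P r"
  have dist: "\<And>s t. s \<noteq> t \<Longrightarrow> lam s \<noteq> lam t" using assms(4) unfolding lam_def by blast
  define Vs where "Vs = (\<lambda>u. {s. lam u \<le> lam s})"
  note MF = M_facts[OF mdp uc ix lam_def dist, folded Vs_def]
  have M1a: "\<And>u t. lam u < lam t \<Longrightarrow> 0 < adv P r (lam u) (Vs u) t" using MF(1) unfolding Vs_def by simp
  have M1b: "\<And>u t. lam t < lam u \<Longrightarrow> adv P r (lam u) (Vs u) t < 0" using MF(2) unfolding Vs_def by simp
  have M3: "\<And>u. adv P r (lam u) (Vs u) u = 0" using MF(3) unfolding Vs_def by simp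
  have M2a: "\<And>u. adv P r 1 (Vs u) u - adv P r 0 (Vs u) u < 0" using MF(4) unfolding Vs_def by simp
  have M2b: "\<And>u. adv P r 1 (flip (Vs u) u) u - adv P r 0 (flip (Vs u) u) u < 0"
    using MF(5) unfolding Vs_def by simp
  define sgh where "sgh = (\<lambda>(Ph :: bool \<Rightarrow> 's \<Rightarrow> 's \<Rightarrow> real) V t. adv Ph r 1 V t - adv Ph r 0 V t)"
  define lhh where "lhh = (\<lambda>Ph u. - adv Ph r 0 (Vs u) u / sgh Ph (Vs u) u)"
  have affP: "adv P r y V t = adv P r 0 V t + y * sgh P V t" for y V t
    unfolding sgh_def by (rule adv_affine[OF mdp uc])
  have T0: "((\<lambda>Ph. adv Ph r 0 V t) \<longlongrightarrow> adv P r 0 V t) (nbh P)" for V t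
    by (rule adv_tendsto[OF mdp uc])
  have T1: "((\<lambda>Ph. adv Ph r 1 V t) \<longlongrightarrow> adv P r 1 V t) (nbh P)" for V t
    by (rule adv_tendsto[OF mdp uc])
  have Tsg: "((\<lambda>Ph. sgh Ph V t) \<longlongrightarrow> sgh P V t) (nbh P)" for V t
    unfolding sgh_def by (intro tendsto_diff T0 T1)
  have Tlh: "((\<lambda>Ph. lhh Ph u) \<longlongrightarrow> lam u) (nbh P)" for u
  proof -
    have ne: "sgh P (Vs u) u \<noteq> 0" using M2a[of u] unfolding sgh_def by simp
    have "((\<lambda>Ph. lhh Ph u) \<longlongrightarrow> - adv P r 0 (Vs u) u / sgh P (Vs u) u) (nbh P)"
      unfolding lhh_def by (intro tendsto_divide tendsto_minus T0 Tsg ne)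
    moreover have "- adv P r 0 (Vs u) u / sgh P (Vs u) u = lam u"
      using M3[of u] affP[of "lam u" "Vs u" u] ne by (simp add: field_simps)
    ultimately show ?thesis by simp
  qed
  have TG3: "((\<lambda>Ph. adv Ph r 0 (Vs u) t + lhh Ph u * sgh Ph (Vs u) t) \<longlongrightarrow> adv P r (lam u) (Vs u) t) (nbh P)" for u t
  proof -
    have "((\<lambda>Ph. adv Ph r 0 (Vs u) t + lhh Ph u * sgh Ph (Vs u) t) \<longlongrightarrow> adv P r 0 (Vs u) t + lam u * sgh P (Vs u) t) (nbh P)"
      by (intro tendsto_add tendsto_mult T0 Tsg Tlh)
    then show ?thesis using affP[of "lam u" "Vs u" t] by simp
  qed
  have ev0: "eventually (\<lambda>Ph. mdp_dist P Ph \<le> 1 \<and> is_mdp Ph \<and> same_support P Ph) (nbh P)"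
    by (rule nbh_eventually_dist) simp
  have ev1a: "eventually (\<lambda>Ph. \<forall>u. sgh Ph (Vs u) u < 0) (nbh P)"
  proof (rule eventually_all_finite)
    fix u show "eventually (\<lambda>Ph. sgh Ph (Vs u) u < 0) (nbh P)"
      by (rule order_tendstoD(2)[OF Tsg]) (use M2a[of u] sgh_def in simp)
  qed
  have ev1b: "eventually (\<lambda>Ph. \<forall>u. sgh Ph (flip (Vs u) u) u < 0) (nbh P)"
  proof (rule eventually_all_finite)
    fix u show "eventually (\<lambda>Ph. sgh Ph (flip (Vs u) u) u < 0) (nbh P)"
      by (rule order_tendstoD(2)[OF Tsg]) (use M2b[of u] sgh_def in simp)
  qed
  have ev2: "eventually (\<lambda>Ph. \<forall>u t. lam u < lam t \<longrightarrow> lhh Ph u < lhh Ph t) (nbh P)"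
  proof (rule eventually_all_finite, rule eventually_all_finite)
    fix u t
    show "eventually (\<lambda>Ph. lam u < lam t \<longrightarrow> lhh Ph u < lhh Ph t) (nbh P)"
    proof (cases "lam u < lam t")
      case True
      have "((\<lambda>Ph. lhh Ph t - lhh Ph u) \<longlongrightarrow> lam t - lam u) (nbh P)" by (intro tendsto_diff Tlh)
      then have "eventually (\<lambda>Ph. 0 < lhh Ph t - lhh Ph u) (nbh P)"
        by (rule order_tendstoD(1)) (use True in simp)
      then show ?thesis by (rule eventually_mono) simp
    qed simp
  qed
  have ev3a: "eventually (\<lambda>Ph. \<forall>u t. lam u < lam t \<longrightarrow> 0 < adv Ph r 0 (Vs u) t + lhh Ph u * sgh Ph (Vs u) t) (nbh P)"
  proof (rule eventually_all_finite, rule eventually_all_finite)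
    fix u t
    show "eventually (\<lambda>Ph. lam u < lam t \<longrightarrow> 0 < adv Ph r 0 (Vs u) t + lhh Ph u * sgh Ph (Vs u) t) (nbh P)"
    proof (cases "lam u < lam t")
      case True
      have "eventually (\<lambda>Ph. 0 < adv Ph r 0 (Vs u) t + lhh Ph u * sgh Ph (Vs u) t) (nbh P)"
        by (rule order_tendstoD(1)[OF TG3]) (rule M1a[OF True])
      then show ?thesis by (rule eventually_mono) simp
    qed simp
  qed
  have ev3b: "eventually (\<lambda>Ph. \<forall>u t. lam t < lam u \<longrightarrow> adv Ph r 0 (Vs u) t + lhh Ph u * sgh Ph (Vs u) t < 0) (nbh P)"
  proof (rule eventually_all_finite, rule eventually_all_finite)
    fix u t
    show "eventually (\<lambda>Ph. lam t < lam u \<longrightarrow> adv Ph r 0 (Vs u) t + lhh Ph u * sgh Ph (Vs u) t < 0) (nbh P)"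
    proof (cases "lam t < lam u")
      case True
      have "eventually (\<lambda>Ph. adv Ph r 0 (Vs u) t + lhh Ph u * sgh Ph (Vs u) t < 0) (nbh P)"
        by (rule order_tendstoD(2)[OF TG3]) (rule M1b[OF True])
      then show ?thesis by (rule eventually_mono) simp
    qed simp
  qed
  have ev: "eventually (\<lambda>Ph. indexable Ph r) (nbh P)"
    using eventually_conj[OF ev0 eventually_conj[OF ev1a eventually_conj[OF ev1b eventually_conj[OF ev2 eventually_conj[OF ev3a ev3b]]]]]
  proof (rule eventually_mono)
    fix Ph assume h: "(mdp_dist P Ph \<le> 1 \<and> is_mdp Ph \<and> same_support P Ph) \<and>
      (\<forall>u. sgh Ph (Vs u) u < 0) \<and> (\<forall>u. sgh Ph (flip (Vs u) u) u < 0) \<and>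
      (\<forall>u t. lam u < lam t \<longrightarrow> lhh Ph u < lhh Ph t) \<and>
      (\<forall>u t. lam u < lam t \<longrightarrow> 0 < adv Ph r 0 (Vs u) t + lhh Ph u * sgh Ph (Vs u) t) \<and>
      (\<forall>u t. lam t < lam u \<longrightarrow> adv Ph r 0 (Vs u) t + lhh Ph u * sgh Ph (Vs u) t < 0)"
    have mdph: "is_mdp Ph" using h by blast
    have uch: "unichain Ph" using same_support_unichain[OF _ uc] h by blast
    have affh: "adv Ph r y V t = adv Ph r 0 V t + y * sgh Ph V t" for y V t
      unfolding sgh_def by (rule adv_affine[OF mdph uch])
    have "\<forall>t. is_whittle_index Ph r t (lhh Ph t)"
    proof (rule ph_indexable[where lam=lam and Vs=Vs and sg="sgh Ph" and lh="lhh Ph", OF Vs_def _ _ mdph uch dist])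
      show "sgh Ph = (\<lambda>V t. adv Ph r 1 V t - adv Ph r 0 V t)" unfolding sgh_def by simp
      show "lhh Ph = (\<lambda>u. - adv Ph r 0 (Vs u) u / sgh Ph (Vs u) u)" unfolding lhh_def by simp
      show "\<And>u. sgh Ph (Vs u) u < 0" using h by blast
      show "\<And>u. sgh Ph (flip (Vs u) u) u < 0" using h by blast
      show "\<And>u t. lam u < lam t \<Longrightarrow> lhh Ph u < lhh Ph t" using h by blast
      show "0 < adv Ph r (lhh Ph u) (Vs u) t" if "lam u < lam t" for u t
        using h that affh[of "lhh Ph u" "Vs u" t] by simp
      show "adv Ph r (lhh Ph u) (Vs u) t < 0" if "lam t < lam u" for u t
        using h that affh[of "lhh Ph u" "Vs u" t] by simp
    qed
    then show "indexable Ph r" unfolding indexable_def by blast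
  qed
  show ?thesis by (rule nbh_extract[OF ev])
qed


end
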